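(* Let $Z_1,\dots,Z_n$ be i.i.d. with distribution $Q$ on a measurable space $\mathcal Z$ and $\psi:\mathcal Z\to\mathbb R^d$ measurable with $\int\|\psi\|^2dQ<\infty$. Let $m_n\to\infty$ and, for each $n$, let $T_{n1},\dots,T_{nn}$ be $m_n$-dimensional random vectors (defined on the same probability space as the $Z_j$). Let $T_n^*=\max_{1\le j\le n}\|T_{nj}\|$, $\bar T_n=\frac1n\sum_{j=1}^nT_{nj}$, $\mathbb S_n=\frac1n\sum_{j=1}^nT_{nj}T_{nj}^\top$, and $A_n=\frac1n\sum_{j=1}^nE\big(\psi(Z_j)T_{nj}^\top\big)$. Assume: (A1) $T_n^*=o_p(m_n^{-3/2}n^{1/2})$; (A2) $\|\bar T_n\|=O_p(m_n^{1/2}n^{-1/2})$; (A3) there is a regular sequence of $m_n\times m_n$ dispersion matrices $W_n$ with $|\mathbb S_n-W_n|_o=o_p(m_n^{-1})$; (B1) $\frac1n\sum_{j=1}^n\big(\psi(Z_j)T_{nj}^\top-E[\psi(Z_j)T_{nj}^\top]\big)=o_p(m_n^{-1/2})$; (B2) there is a measurable $\chi:\mathcal Z\to\mathbb R^d$ with $\int\chi\,dQ=0$, $\int\|\chi\|^2dQ<\infty$ and $\frac1n\sum_{i=1}^n\big(A_nW_n^{-1}T_{ni}-\chi(Z_i)\big)=o_p(n^{-1/2})$. Then, on an event whose probability tends to one, there exists a unique $\zeta_n\in\mathbb R^{m_n}$ with $$1+\zeta_n^\top T_{nj}>0\ (j=1,\dots,n),\qquad \frac1n\sum_{j=1}^n\frac{T_{nj}}{1+\zeta_n^\top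 T_{nj}}=0,$$ and $$\theta_n:=\frac1n\sum_{j=1}^n\frac{\psi(Z_j)}{1+\zeta_n^\top T_{nj}}=\bar\psi-\bar\chi+o_p(n^{-1/2}),$$ where $\bar\psi=\frac1n\sum_j\psi(Z_j)$ and $\bar\chi=\frac1n\sum_j\chi(Z_j)$.
   Context: A sequence of $m_n\times m_n$ dispersion matrices $W_n$ is called regular if $0<\inf_n\inf_{\|a\|=1}a^\top W_na\le\sup_n\sup_{\|a\|=1}a^\top W_na<\infty$. $|A|_o$ denotes the spectral (operator) norm of a matrix. *)

theory Defs
  imports "HOL-Probability.Probability"
begin

text \<open>Vectors of varying dimension m are represented as functions nat \<Rightarrow> real,
  of which only the components k < m are relevant; matrices as nat \<Rightarrow> nat \<Rightarrow> real
  (entries i,j < m relevant).  A d \<times> m matrix (d fixed) is represented by its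
  columns, nat \<Rightarrow> 'b with 'b a Euclidean space of dimension d.\<close>

definition extvec :: "nat \<Rightarrow> (nat \<Rightarrow> real) set" where
  "extvec m = {v. \<forall>k\<ge>m. v k = 0}"

definition vnorm :: "nat \<Rightarrow> (nat \<Rightarrow> real) \<Rightarrow> real" where
  "vnorm m v = sqrt (\<Sum>k<m. (v k)\<^sup>2)"

definition vdot :: "nat \<Rightarrow> (nat \<Rightarrow> real) \<Rightarrow> (nat \<Rightarrow> real) \<Rightarrow> real" where
  "vdot m u v = (\<Sum>k<m. u k * v k)"

definition mv :: "nat \<Rightarrow> (nat \<Rightarrow> nat \<Rightarrow> real) \<Rightarrow> (nat \<Rightarrow> real) \<Rightarrow> (nat \<Rightarrow> real)" where
  "mv m A v = (\<lambda>i. if i < m then (\<Sum>k<m. A i k * v k) else 0)"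

definition opnorm :: "nat \<Rightarrow> (nat \<Rightarrow> nat \<Rightarrow> real) \<Rightarrow> real" where
  "opnorm m A = Sup {vnorm m (mv m A x) | x. vnorm m x \<le> 1}"

definition minv :: "nat \<Rightarrow> (nat \<Rightarrow> nat \<Rightarrow> real) \<Rightarrow> (nat \<Rightarrow> nat \<Rightarrow> real)" where
  "minv m A = (SOME B. \<forall>i<m. \<forall>j<m. (\<Sum>k<m. A i k * B k j) = (if i = j then 1 else 0))"

definition regular_disp :: "(nat \<Rightarrow> nat) \<Rightarrow> (nat \<Rightarrow> nat \<Rightarrow> nat \<Rightarrow> real) \<Rightarrow> bool" where
  "regular_disp m W \<longleftrightarrow>
     (\<forall>n. \<forall>i<m n. \<forall>j<m n. W n i j = W n j i) \<and>
     (\<exists>c C. 0 < c \<and> (\<forall>n a. vnorm (m n) a = 1 \<longrightarrow>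
        c \<le> (\<Sum>i<m n. \<Sum>j<m n. a i * W n i j * a j) \<and>
        (\<Sum>i<m n. \<Sum>j<m n. a i * W n i j * a j) \<le> C))"

text \<open>Stochastic order symbols, stated with outer probability (for measurable
  random variables this is the usual notion).\<close>
definition o_p :: "'a measure \<Rightarrow> (nat \<Rightarrow> 'a \<Rightarrow> 'c::real_normed_vector) \<Rightarrow> (nat \<Rightarrow> real) \<Rightarrow> bool" where
  "o_p M X r \<longleftrightarrow> (\<forall>\<epsilon>>0. \<forall>\<delta>>0. eventually (\<lambda>n. \<exists>A\<in>sets M. measure M A \<le> \<delta> \<and>
      {\<omega>\<in>space M. norm (X n \<omega>) > \<epsilon> * r n} \<subseteq> A) sequentially)"

definition O_p :: "'a measure \<Rightarrow> (nat \<Rightarrow> 'a \<Rightarrow> 'c::real_normed_vector) \<Rightarrow> (nat \<Rightarrow> real) \<Rightarrow> bool" where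
  "O_p M X r \<longleftrightarrow> (\<forall>\<delta>>0. \<exists>K. eventually (\<lambda>n. \<exists>A\<in>sets M. measure M A \<le> \<delta> \<and>
      {\<omega>\<in>space M. norm (X n \<omega>) > K * r n} \<subseteq> A) sequentially)"

definition el_root :: "nat \<Rightarrow> nat \<Rightarrow> (nat \<Rightarrow> nat \<Rightarrow> real) \<Rightarrow> (nat \<Rightarrow> real) \<Rightarrow> bool" where
  "el_root m n Tj zeta \<longleftrightarrow> zeta \<in> extvec m \<and>
     (\<forall>j<n. 1 + vdot m zeta (Tj j) > 0) \<and>
     (\<forall>k<m. (\<Sum>j<n. Tj j k / (1 + vdot m zeta (Tj j))) = 0)"

end

theory Submission
  imports Defs "Jordan_Normal_Form.Determinant"
begin

lemma vnorm_L2: "vnorm m v = L2_set v {..<m}"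
  by (simp add: vnorm_def L2_set_def)

lemma vnorm_nonneg[simp]: "0 \<le> vnorm m v"
  by (simp add: vnorm_L2)

lemma vnorm_sq: "(vnorm m v)\<^sup>2 = (\<Sum>k<m. (v k)\<^sup>2)"
  by (simp add: vnorm_def sum_nonneg)

lemma vdot_CS: "\<bar>vdot m u v\<bar> \<le> vnorm m u * vnorm m v"
proof -
  have "\<bar>vdot m u v\<bar> \<le> (\<Sum>k<m. \<bar>u k\<bar> * \<bar>v k\<bar>)"
    unfolding vdot_def using sum_abs[of "\<lambda>k. u k * v k" "{..<m}"] by (simp add: abs_mult)
  also have "\<dots> \<le> vnorm m u * vnorm m v" unfolding vnorm_L2 by (rule L2_set_mult_ineq)
  finally show ?thesis .
qed

lemma vdot_CS': "vdot m u v \<le> vnorm m u * vnorm m v"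
  using vdot_CS[of m u v] by linarith

lemma vnorm_triangle: "vnorm m (\<lambda>k. u k + v k) \<le> vnorm m u + vnorm m v"
  unfolding vnorm_L2 by (rule L2_set_triangle_ineq)

lemma vnorm_scale: "vnorm m (\<lambda>k. a * v k) = \<bar>a\<bar> * vnorm m v"
  unfolding vnorm_def by (simp add: power_mult_distrib real_sqrt_mult sum_nonneg flip: sum_distrib_left)

lemma vnorm_div: "vnorm m (\<lambda>k. v k / a) = vnorm m v / \<bar>a\<bar>"
  by (simp add: vnorm_def power_divide real_sqrt_divide flip: sum_divide_distrib)

lemma vnorm_eq0: "vnorm m v = 0 \<Longrightarrow> k < m \<Longrightarrow> v k = 0"
  unfolding vnorm_L2 by (simp add: L2_set_eq_0_iff)

lemma vnorm_cong: "(\<And>k. k < m \<Longrightarrow> u k = v k) \<Longrightarrow> vnorm m u = vnorm m v"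
  unfolding vnorm_def by simp

lemma vdot_cong: "(\<And>k. k < m \<Longrightarrow> u k = u' k) \<Longrightarrow> (\<And>k. k < m \<Longrightarrow> v k = v' k) \<Longrightarrow> vdot m u v = vdot m u' v'"
  unfolding vdot_def by simp

lemma vdot_self: "vdot m v v = (vnorm m v)\<^sup>2"
  unfolding vdot_def using vnorm_sq[of m v] by (simp add: power2_eq_square)

lemma vdot_comm: "vdot m u v = vdot m v u"
  by (simp add: vdot_def mult.commute)

definition qf :: "nat \<Rightarrow> (nat \<Rightarrow> nat \<Rightarrow> real) \<Rightarrow> (nat \<Rightarrow> real) \<Rightarrow> real" where
  "qf m A a = vdot m a (mv m A a)"

lemma qf_alt: "qf m A a = (\<Sum>i<m. \<Sum>j<m. a i * A i j * a j)"
  unfolding qf_def vdot_def mv_def by (auto simp: sum_distrib_left mult.assoc intro!: sum.cong)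

lemma vnorm_mv_frob: "vnorm m (mv m A x) \<le> sqrt (\<Sum>i<m. (L2_set (A i) {..<m})\<^sup>2) * vnorm m x"
proof -
  have h1: "\<bar>mv m A x i\<bar> \<le> L2_set (A i) {..<m} * vnorm m x" if "i < m" for i
    using that vdot_CS[of m "A i" x] by (simp add: mv_def vdot_def vnorm_L2)
  have "(mv m A x i)\<^sup>2 \<le> (L2_set (A i) {..<m})\<^sup>2 * (vnorm m x)\<^sup>2" if "i < m" for i
    using power_mono[OF h1[OF that], of 2] by (simp add: power_mult_distrib)
  hence "(\<Sum>i<m. (mv m A x i)\<^sup>2) \<le> (\<Sum>i<m. (L2_set (A i) {..<m})\<^sup>2) * (vnorm m x)\<^sup>2"
    unfolding sum_distrib_right by (intro sum_mono) simp
  hence "sqrt (\<Sum>i<m. (mv m A x i)\<^sup>2) \<le> sqrt ((\<Sum>i<m. (L2_set (A i) {..<m})\<^sup>2) * (vnorm m x)\<^sup>2)"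
    using real_sqrt_le_mono by blast
  thus ?thesis by (simp add: vnorm_def real_sqrt_mult sum_nonneg)
qed

lemma opnorm_bound: "vnorm m (mv m A x) \<le> opnorm m A * vnorm m x"
proof -
  define F where "F = sqrt (\<Sum>i<m. (L2_set (A i) {..<m})\<^sup>2)"
  define S where "S = {vnorm m (mv m A x) | x. vnorm m x \<le> 1}"
  have bdd: "bdd_above S"
    unfolding S_def bdd_above_def
  proof (intro exI ballI)
    fix y assume "y \<in> {vnorm m (mv m A x) | x. vnorm m x \<le> 1}"
    then obtain x where y: "y = vnorm m (mv m A x)" "vnorm m x \<le> 1" by auto
    have "y \<le> F * vnorm m x" using vnorm_mv_frob[of m A x] y by (simp add: F_def)
    also have "\<dots> \<le> F * 1" using y(2) by (intro mult_left_mono) (auto simp: F_def sum_nonneg)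
    finally show "y \<le> F" by simp
  qed
  show ?thesis
  proof (cases "vnorm m x = 0")
    case True
    have "mv m A x i = 0" for i using vnorm_eq0[OF True] by (simp add: mv_def)
    hence "vnorm m (mv m A x) = 0" by (simp add: vnorm_def)
    thus ?thesis using True by simp
  next
    case False
    hence pos: "vnorm m x > 0" using vnorm_nonneg[of m x] by linarith
    define x' where "x' = (\<lambda>k. (1 / vnorm m x) * x k)"
    have "vnorm m x' = 1" unfolding x'_def vnorm_scale using pos by simp
    hence "vnorm m (mv m A x') \<in> S" unfolding S_def by auto
    hence le: "vnorm m (mv m A x') \<le> opnorm m A" unfolding opnorm_def S_def[symmetric]
      using bdd by (rule cSup_upper)
    have "mv m A x' = (\<lambda>i. (1 / vnorm m x) * mv m A x i)"
      by (auto simp: mv_def x'_def sum_divide_distrib fun_eq_iff)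
    hence "vnorm m (mv m A x') = vnorm m (mv m A x) / vnorm m x"
      using pos by (simp add: vnorm_div)
    with le pos show ?thesis by (simp add: divide_le_eq mult.commute)
  qed
qed

lemma qf_opnorm: "\<bar>qf m A a\<bar> \<le> opnorm m A * (vnorm m a)\<^sup>2"
proof -
  have "\<bar>qf m A a\<bar> \<le> vnorm m a * vnorm m (mv m A a)" unfolding qf_def by (rule vdot_CS)
  also have "\<dots> \<le> vnorm m a * (opnorm m A * vnorm m a)"
    by (intro mult_left_mono opnorm_bound) simp
  finally show ?thesis by (simp add: power2_eq_square algebra_simps)
qed

lemma qf_diff: "qf m (\<lambda>k l. A k l - B k l) a = qf m A a - qf m B a"
  by (simp add: qf_alt left_diff_distrib right_diff_distrib sum_subtractf)

lemma qf_div: "qf m A (\<lambda>k. a k / s) = qf m A a / s\<^sup>2"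
  by (simp add: qf_alt sum_divide_distrib power2_eq_square)

lemma qf_zero: "vnorm m a = 0 \<Longrightarrow> qf m A a = 0"
  using vnorm_eq0[of m a] by (simp add: qf_alt)

lemma reg_bounds:
  assumes "\<forall>a. vnorm m a = 1 \<longrightarrow> c \<le> (\<Sum>i<m. \<Sum>j<m. a i * W i j * a j) \<and>
        (\<Sum>i<m. \<Sum>j<m. a i * W i j * a j) \<le> C"
  shows "c * (vnorm m a)\<^sup>2 \<le> qf m W a \<and> qf m W a \<le> C * (vnorm m a)\<^sup>2"
proof (cases "vnorm m a = 0")
  case True thus ?thesis by (simp add: qf_zero)
next
  case False
  hence pos: "vnorm m a > 0" using vnorm_nonneg[of m a] by linarith
  define a' where "a' = (\<lambda>k. a k / vnorm m a)"
  have "vnorm m a' = 1" using pos by (simp add: a'_def vnorm_div)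
  with assms have "c \<le> qf m W a' \<and> qf m W a' \<le> C" by (simp add: qf_alt)
  moreover have "qf m W a' = qf m W a / (vnorm m a)\<^sup>2" by (simp add: a'_def qf_div)
  ultimately show ?thesis using pos by (simp add: field_simps)
qed

definition Smat :: "nat \<Rightarrow> (nat \<Rightarrow> nat \<Rightarrow> real) \<Rightarrow> nat \<Rightarrow> nat \<Rightarrow> real" where
  "Smat n Tj = (\<lambda>k l. (\<Sum>j<n. Tj j k * Tj j l) / real n)"

lemma qf_Smat: "qf m (Smat n Tj) a = (\<Sum>j<n. (vdot m a (Tj j))\<^sup>2) / real n"
proof -
  have "qf m (Smat n Tj) a = (\<Sum>i<m. \<Sum>k<m. \<Sum>j<n. a i * Tj j i * (Tj j k * a k)) / real n"
    by (simp add: qf_alt Smat_def sum_divide_distrib sum_distrib_left sum_distrib_right mult_ac)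
  also have "\<dots> = (\<Sum>j<n. \<Sum>i<m. \<Sum>k<m. a i * Tj j i * (Tj j k * a k)) / real n"
    by (subst sum.swap, rule arg_cong[where f="\<lambda>x. x / real n"], rule sum.cong[OF refl], rule sum.swap)
  also have "\<dots> = (\<Sum>j<n. (vdot m a (Tj j))\<^sup>2) / real n"
    unfolding vdot_def power2_eq_square sum_product by (simp add: mult_ac)
  finally show ?thesis .
qed

definition tstar :: "nat \<Rightarrow> nat \<Rightarrow> (nat \<Rightarrow> nat \<Rightarrow> real) \<Rightarrow> real" where
  "tstar m n Tj = Max (insert 0 ((\<lambda>j. vnorm m (Tj j)) ` {..<n}))"

lemma tstar_nonneg: "0 \<le> tstar m n Tj"
  unfolding tstar_def by (rule Max_ge) auto

lemma tstar_ge: "j < n \<Longrightarrow> vnorm m (Tj j) \<le> tstar m n Tj"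
  unfolding tstar_def by (rule Max_ge) auto

lemma vdot_tstar: "j < n \<Longrightarrow> \<bar>vdot m a (Tj j)\<bar> \<le> vnorm m a * tstar m n Tj"
  using vdot_CS[of m a "Tj j"] tstar_ge[of j n m Tj]
  by (meson mult_left_mono order_trans vnorm_nonneg)

lemma qf_Smat_upper:
  assumes "n > 0"
  shows "qf m (Smat n Tj) a \<le> (tstar m n Tj)\<^sup>2 * (vnorm m a)\<^sup>2"
proof -
  have "(vdot m a (Tj j))\<^sup>2 \<le> (tstar m n Tj)\<^sup>2 * (vnorm m a)\<^sup>2" if "j < n" for j
    using power_mono[OF vdot_tstar[OF that, of m a Tj], of 2]
    by (simp add: power_mult_distrib mult.commute)
  hence "(\<Sum>j<n. (vdot m a (Tj j))\<^sup>2) \<le> real n * ((tstar m n Tj)\<^sup>2 * (vnorm m a)\<^sup>2)"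
    using sum_mono[of "{..<n}" "\<lambda>j. (vdot m a (Tj j))\<^sup>2" "\<lambda>_. (tstar m n Tj)\<^sup>2 * (vnorm m a)\<^sup>2"]
    by simp
  thus ?thesis using assms by (simp add: qf_Smat divide_le_eq mult.commute)
qed

lemma minv_prop:
  assumes c: "c > 0" and pd: "\<And>a. c * (vnorm m a)\<^sup>2 \<le> qf m W a"
  shows "\<forall>i<m. \<forall>j<m. (\<Sum>k<m. W i k * minv m W k j) = (if i = j then 1 else 0)"
proof -
  define A :: "real mat" where "A = mat m m (\<lambda>(i,j). W i j)"
  have Ac: "A \<in> carrier_mat m m" by (simp add: A_def)
  have "det A \<noteq> 0"
  proof
    assume "det A = 0"
    then obtain v where v: "v \<in> carrier_vec m" "v \<noteq> 0\<^sub>v m" "A *\<^sub>v v = 0\<^sub>v m"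
      using det_0_iff_vec_prod_zero[OF Ac] by auto
    define a where "a = (\<lambda>k. if k < m then v $ k else 0)"
    have "mv m W a i = 0" for i
    proof (cases "i < m")
      case True
      have "(A *\<^sub>v v) $ i = 0" using v(3) True by simp
      hence "(\<Sum>k<m. W i k * v $ k) = 0" using True v(1)
        by (simp add: A_def scalar_prod_def lessThan_atLeast0)
      thus ?thesis using True by (simp add: mv_def a_def)
    qed (simp add: mv_def)
    hence "qf m W a = 0" by (simp add: qf_def vdot_def)
    hence "c * (vnorm m a)\<^sup>2 \<le> 0" using pd[of a] by simp
    hence "vnorm m a = 0" using c by (simp add: mult_le_0_iff)
    hence "v $ k = 0" if "k < m" for k using vnorm_eq0[of m a k] that by (simp add: a_def)
    hence "v = 0\<^sub>v m" using v(1) by (intro eq_vecI) auto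
    with v(2) show False by simp
  qed
  then have "A \<in> Units (ring_mat TYPE(real) m ())" by (rule det_non_zero_imp_unit[OF Ac])
  then obtain B where "B \<in> carrier (ring_mat TYPE(real) m ())"
      "A \<otimes>\<^bsub>ring_mat TYPE(real) m ()\<^esub> B = \<one>\<^bsub>ring_mat TYPE(real) m ()\<^esub>"
    unfolding Units_def by blast
  then have B: "B \<in> carrier_mat m m" "A * B = 1\<^sub>m m" by (simp_all add: ring_mat_def)
  have "\<forall>i<m. \<forall>j<m. (\<Sum>k<m. W i k * B $$ (k, j)) = (if i = j then 1 else 0)"
  proof (intro allI impI)
    fix i j assume ij: "i < m" "j < m"
    have "(A * B) $$ (i, j) = 1\<^sub>m m $$ (i, j)" by (simp only: B(2))
    also have "\<dots> = (if i = j then 1 else 0)" using ij by simp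
    finally have e1: "(A * B) $$ (i, j) = (if i = j then 1 else 0)" .
    have "(A * B) $$ (i, j) = row A i \<bullet> col B j" using ij B(1) Ac by simp
    also have "\<dots> = (\<Sum>k<m. W i k * B $$ (k, j))"
      using ij B(1) by (simp add: A_def scalar_prod_def lessThan_atLeast0)
    finally show "(\<Sum>k<m. W i k * B $$ (k, j)) = (if i = j then 1 else 0)" using e1 by simp
  qed
  hence "\<exists>B. \<forall>i<m. \<forall>j<m. (\<Sum>k<m. W i k * B k j) = (if i = j then 1 else 0)"
    by (intro exI[of _ "\<lambda>k j. B $$ (k, j)"])
  thus ?thesis unfolding minv_def by (rule someI_ex)
qed

lemma mv_minv:
  assumes "\<forall>i<m. \<forall>j<m. (\<Sum>k<m. W i k * B k j) = (if i = j then 1 else 0)" "i < m"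
  shows "mv m W (mv m B x) i = x i"
proof -
  have "mv m W (mv m B x) i = (\<Sum>k<m. \<Sum>l<m. W i k * B k l * x l)"
    using assms(2) by (simp add: mv_def sum_distrib_left mult.assoc)
  also have "\<dots> = (\<Sum>l<m. (\<Sum>k<m. W i k * B k l) * x l)"
    by (subst sum.swap) (simp add: sum_distrib_right)
  also have "\<dots> = (\<Sum>l<m. if i = l then x l else 0)"
    using assms by (intro sum.cong) auto
  also have "\<dots> = x i" using assms(2) by simp
  finally show ?thesis .
qed

lemma minv_bound:
  assumes c: "c > 0" and pd: "\<And>a. c * (vnorm m a)\<^sup>2 \<le> qf m W a"
  shows "vnorm m (mv m (minv m W) x) \<le> vnorm m x / c"
proof -
  define v where "v = mv m (minv m W) x"
  have inv: "mv m W v i = x i" if "i < m" for i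
    unfolding v_def by (rule mv_minv[OF minv_prop[OF c pd] that])
  have "c * (vnorm m v)\<^sup>2 \<le> qf m W v" by (rule pd)
  also have "\<dots> = vdot m v x" unfolding qf_def by (rule vdot_cong) (auto simp: inv)
  also have "\<dots> \<le> vnorm m v * vnorm m x" by (rule vdot_CS')
  finally have "c * (vnorm m v)\<^sup>2 \<le> vnorm m v * vnorm m x" .
  hence "c * vnorm m v \<le> vnorm m x" if "vnorm m v > 0"
    using that by (simp add: power2_eq_square mult.assoc[symmetric] mult.commute[of c]
      mult_le_cancel_right)
  hence pp: "c * vnorm m v \<le> vnorm m x" if "vnorm m v > 0" using that by blast
  have "c * vnorm m v \<le> vnorm m x"
  proof (cases "vnorm m v > 0")
    case True thus ?thesis by (rule pp)
  next
    case False hence "vnorm m v = 0" using vnorm_nonneg[of m v] by linarith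
    thus ?thesis by simp
  qed
  thus ?thesis using c by (simp add: v_def field_simps)
qed


definition tbar :: "nat \<Rightarrow> (nat \<Rightarrow> nat \<Rightarrow> real) \<Rightarrow> nat \<Rightarrow> real" where
  "tbar n Tj = (\<lambda>k. (\<Sum>j<n. Tj j k) / real n)"

lemma sum_vdot_tbar:
  assumes "n > 0"
  shows "(\<Sum>j<n. vdot m x (Tj j)) = real n * vdot m x (tbar n Tj)"
proof -
  have e1: "(\<Sum>j<n. vdot m x (Tj j)) = (\<Sum>k<m. x k * (\<Sum>j<n. Tj j k))"
    unfolding vdot_def by (subst sum.swap) (simp add: sum_distrib_left)
  have e2: "vdot m x (tbar n Tj) = (\<Sum>k<m. x k * (\<Sum>j<n. Tj j k)) / real n"
    unfolding vdot_def tbar_def times_divide_eq_right by (rule sum_divide_distrib[symmetric])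
  show ?thesis using assms by (simp add: e1 e2)
qed

lemma root_lin:
  assumes "el_root m n Tj z"
  shows "(\<Sum>j<n. vdot m w (Tj j) / (1 + vdot m z (Tj j))) = 0"
proof -
  have "(\<Sum>j<n. vdot m w (Tj j) / (1 + vdot m z (Tj j)))
      = (\<Sum>k<m. w k * (\<Sum>j<n. Tj j k / (1 + vdot m z (Tj j))))"
    unfolding vdot_def[of m w] sum_divide_distrib by (subst sum.swap) (simp add: sum_distrib_left)
  also have "\<dots> = 0" using assms by (simp add: el_root_def)
  finally show ?thesis .
qed

lemma root_bound:
  assumes R: "el_root m n Tj z" and n: "n > 0"
    and pd: "\<And>a. lam * (vnorm m a)\<^sup>2 \<le> qf m (Smat n Tj) a"
  shows "vnorm m z * (lam - vnorm m (tbar n Tj) * tstar m n Tj) \<le> vnorm m (tbar n Tj)"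
proof -
  define u where "u j = vdot m z (Tj j)" for j
  define zz where "zz = vnorm m z"
  define tb where "tb = vnorm m (tbar n Tj)"
  define ts where "ts = tstar m n Tj"
  have pos: "1 + u j > 0" if "j < n" for j using R that by (simp add: el_root_def u_def)
  have ule: "\<bar>u j\<bar> \<le> zz * ts" if "j < n" for j
    unfolding u_def zz_def ts_def by (rule vdot_tstar[OF that])
  have zts: "0 \<le> zz * ts" by (simp add: zz_def ts_def tstar_nonneg)
  have "(\<Sum>j<n. u j / (1 + u j)) = 0" using root_lin[OF R, of z] by (simp add: u_def)
  moreover have "u j / (1 + u j) = u j - (u j)\<^sup>2 / (1 + u j)" if "j < n" for j
    using pos[OF that] by (simp add: field_simps power2_eq_square)
  ultimately have "(\<Sum>j<n. u j) = (\<Sum>j<n. (u j)\<^sup>2 / (1 + u j))"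
    by (simp add: sum_subtractf)
  moreover have "(\<Sum>j<n. u j) = real n * vdot m z (tbar n Tj)"
    unfolding u_def by (rule sum_vdot_tbar[OF n])
  moreover have "(\<Sum>j<n. (u j)\<^sup>2 / (1 + zz * ts)) \<le> (\<Sum>j<n. (u j)\<^sup>2 / (1 + u j))"
  proof (rule sum_mono)
    fix j assume "j \<in> {..<n}"
    hence j: "j < n" by simp
    show "(u j)\<^sup>2 / (1 + zz * ts) \<le> (u j)\<^sup>2 / (1 + u j)"
      using pos[OF j] ule[OF j] by (intro divide_left_mono) (auto simp: abs_le_iff)
  qed
  moreover have "(\<Sum>j<n. (u j)\<^sup>2 / (1 + zz * ts)) = real n * qf m (Smat n Tj) z / (1 + zz * ts)"
    using n by (simp add: qf_Smat u_def flip: sum_divide_distrib)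
  moreover have "vdot m z (tbar n Tj) \<le> zz * tb" unfolding zz_def tb_def by (rule vdot_CS')
  ultimately have "real n * qf m (Smat n Tj) z / (1 + zz * ts) \<le> real n * (zz * tb)"
    using n by (smt (verit) mult_left_mono of_nat_0_le_iff)
  hence "real n * qf m (Smat n Tj) z \<le> real n * ((zz * tb) * (1 + zz * ts))"
    using n zts by (simp add: field_simps)
  hence "qf m (Smat n Tj) z \<le> (zz * tb) * (1 + zz * ts)"
    using n by (simp add: mult_le_cancel_left_pos)
  hence key: "lam * zz\<^sup>2 \<le> zz * tb * (1 + zz * ts)"
    using pd[of z] by (simp add: zz_def)
  show ?thesis
  proof (cases "zz = 0")
    case True thus ?thesis by (simp add: zz_def)
  next
    case False
    hence "zz > 0" by (simp add: zz_def order_less_le)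
    have "zz * (lam * zz) \<le> zz * (tb * (1 + zz * ts))" using key
      by (simp add: power2_eq_square algebra_simps)
    hence "lam * zz \<le> tb * (1 + zz * ts)" using \<open>zz > 0\<close> by (simp add: mult_le_cancel_left_pos)
    thus ?thesis by (simp add: zz_def[symmetric] tb_def[symmetric] ts_def[symmetric] algebra_simps)
  qed
qed

lemma root_unique:
  assumes R1: "el_root m n Tj z1" and R2: "el_root m n Tj z2" and n: "n > 0"
    and lam: "lam > 0" and pd: "\<And>a. lam * (vnorm m a)\<^sup>2 \<le> qf m (Smat n Tj) a"
  shows "z1 = z2"
proof -
  define w where "w k = z2 k - z1 k" for k
  define a where "a j = vdot m z1 (Tj j)" for j
  define b where "b j = vdot m z2 (Tj j)" for j
  define c where "c j = vdot m w (Tj j)" for j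
  have cab: "c j = b j - a j" for j by (simp add: c_def a_def b_def w_def vdot_def sum_subtractf left_diff_distrib)
  have pa: "1 + a j > 0" if "j < n" for j using R1 that by (simp add: el_root_def a_def)
  have pb: "1 + b j > 0" if "j < n" for j using R2 that by (simp add: el_root_def b_def)
  have "(\<Sum>j<n. c j / (1 + a j)) = 0" using root_lin[OF R1] by (simp add: c_def a_def)
  moreover have "(\<Sum>j<n. c j / (1 + b j)) = 0" using root_lin[OF R2] by (simp add: c_def b_def)
  ultimately have "(\<Sum>j<n. c j / (1 + a j) - c j / (1 + b j)) = 0" by (simp add: sum_subtractf)
  moreover have "c j / (1 + a j) - c j / (1 + b j) = (c j)\<^sup>2 / ((1 + a j) * (1 + b j))" if "j < n" for j
    using pa[OF that] pb[OF that] by (simp add: cab field_simps power2_eq_square)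
  ultimately have s0: "(\<Sum>j<n. (c j)\<^sup>2 / ((1 + a j) * (1 + b j))) = 0" by simp
  have "\<forall>j\<in>{..<n}. (c j)\<^sup>2 / ((1 + a j) * (1 + b j)) = 0"
    using s0 pa pb by (subst sum_nonneg_eq_0_iff[symmetric]) (auto intro!: divide_nonneg_pos)
  hence "c j = 0" if "j < n" for j using that pa[OF that] pb[OF that] by auto
  hence "qf m (Smat n Tj) w = 0" by (simp add: qf_Smat c_def)
  hence "lam * (vnorm m w)\<^sup>2 \<le> 0" using pd[of w] by simp
  hence "vnorm m w = 0" using lam by (simp add: mult_le_0_iff)
  hence "z1 k = z2 k" if "k < m" for k using vnorm_eq0[of m w k] that by (simp add: w_def)
  moreover have "z1 k = z2 k" if "k \<ge> m" for k using R1 R2 that by (simp add: el_root_def extvec_def)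
  ultimately show ?thesis by (meson ext not_le)
qed


lemma ln_upper:
  fixes u :: real
  assumes "\<bar>u\<bar> \<le> 1/2"
  shows "ln (1 + u) \<le> u - u\<^sup>2 / 3"
proof -
  define f where "f x = x - x\<^sup>2 / 3 - ln (1 + x)" for x :: real
  have D: "DERIV f x :> x * (1 - 2 * x) / (3 * (1 + x))" if "\<bar>x\<bar> \<le> 1/2" for x
  proof -
    have px: "1 + x > 0" using that by linarith
    have "DERIV f x :> 1 - 2 * x / 3 - 1 / (1 + x)"
      unfolding f_def using px by (auto intro!: derivative_eq_intros simp: power2_eq_square)
    moreover have "1 - 2 * x / 3 - 1 / (1 + x) = x * (1 - 2 * x) / (3 * (1 + x))"
      using px by (simp add: field_simps)
    ultimately show ?thesis by simp
  qed
  have f0: "f 0 = 0" by (simp add: f_def)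
  have "f 0 \<le> f u"
  proof (cases "u \<ge> 0")
    case True
    show ?thesis
    proof (rule DERIV_nonneg_imp_nondecreasing[OF True])
      fix x assume x: "0 \<le> x" "x \<le> u"
      hence ax: "\<bar>x\<bar> \<le> 1/2" using assms by linarith
      have "x * (1 - 2 * x) / (3 * (1 + x)) \<ge> 0" using x ax
        by (intro divide_nonneg_pos mult_nonneg_nonneg) auto
      thus "\<exists>y. DERIV f x :> y \<and> 0 \<le> y" using D[OF ax] by blast
    qed
  next
    case False
    hence u0: "u \<le> 0" by simp
    show ?thesis
    proof (rule DERIV_nonpos_imp_nonincreasing[OF u0])
      fix x assume x: "u \<le> x" "x \<le> 0"
      hence ax: "\<bar>x\<bar> \<le> 1/2" using assms by linarith
      have "x * (1 - 2 * x) / (3 * (1 + x)) \<le> 0" using x ax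
        by (intro divide_nonpos_pos mult_nonpos_nonneg) auto
      thus "\<exists>y. DERIV f x :> y \<and> y \<le> 0" using D[OF ax] by blast
    qed
  qed
  thus ?thesis using f0 by (simp add: f_def)
qed

lemma comp_le_vnorm: "i < m \<Longrightarrow> \<bar>y i\<bar> \<le> vnorm m y"
proof -
  assume i: "i < m"
  have "(y i)\<^sup>2 \<le> (\<Sum>k<m. (y k)\<^sup>2)" using i by (intro member_le_sum) auto
  hence "sqrt ((y i)\<^sup>2) \<le> sqrt (\<Sum>k<m. (y k)\<^sup>2)" by (rule real_sqrt_le_mono)
  thus ?thesis by (simp add: vnorm_def)
qed

lemma vdot_shift:
  assumes "k < m"
  shows "vdot m (\<lambda>i. x i + t * (if i = k then 1 else 0)) v = vdot m x v + t * v k"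
proof -
  have "vdot m (\<lambda>i. x i + t * (if i = k then 1 else 0)) v
      = vdot m x v + (\<Sum>i<m. t * (if i = k then 1 else 0) * v i)"
    unfolding vdot_def by (simp add: sum.distrib distrib_right)
  moreover have "(\<Sum>i<m. t * (if i = k then 1 else 0) * v i) = (\<Sum>i<m. (if i = k then t * v k else 0))"
    by (rule sum.cong) auto
  moreover have "(\<Sum>i<m. (if i = k then t * v k else 0)) = t * v k" using assms by simp
  ultimately show ?thesis by simp
qed

lemma vnorm_unit: "k < m \<Longrightarrow> vnorm m (\<lambda>i. if i = k then 1 else 0) = 1"
proof -
  assume k: "k < m"
  have "(\<Sum>i<m. (if i = k then 1 else 0::real)\<^sup>2) = (\<Sum>i<m. if i = k then 1 else 0)"
    by (rule sum.cong) auto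
  thus ?thesis using k by (simp add: vnorm_def)
qed

lemma continuous_vdot[continuous_intros]: "continuous_on S (\<lambda>x. vdot m x v)"
  unfolding vdot_def
  by (intro continuous_intros continuous_on_subset[OF continuous_on_product_coordinates]) auto

lemma continuous_vnorm: "continuous_on S (\<lambda>x. vnorm m x)"
  unfolding vnorm_def
  by (intro continuous_intros continuous_on_subset[OF continuous_on_product_coordinates]) auto

lemma root_exists:
  assumes m: "m > 0" and n: "n > 0" and lam: "lam > 0"
    and pd: "\<And>a. lam * (vnorm m a)\<^sup>2 \<le> qf m (Smat n Tj) a"
    and small: "6 * vnorm m (tbar n Tj) * tstar m n Tj < lam"
  shows "\<exists>z. el_root m n Tj z"
proof -
  define ts where "ts = tstar m n Tj"
  define tb where "tb = vnorm m (tbar n Tj)"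
  have ts0: "ts \<ge> 0" by (simp add: ts_def tstar_nonneg)
  have tb0: "tb \<ge> 0" by (simp add: tb_def)
  define e0 where "e0 = (\<lambda>i::nat. if i = 0 then 1 else (0::real))"
  have "vnorm m e0 = 1" using m unfolding e0_def by (rule vnorm_unit)
  hence "lam \<le> qf m (Smat n Tj) e0" using pd[of e0] by simp
  also have "\<dots> \<le> ts\<^sup>2" using qf_Smat_upper[OF n, of m Tj e0] \<open>vnorm m e0 = 1\<close> by (simp add: ts_def)
  finally have "ts > 0" using lam ts0 by (cases "ts = 0") auto
  define r where "r = 1 / (2 * ts)"
  have r0: "r > 0" using \<open>ts > 0\<close> by (simp add: r_def)
  have rts: "r * ts = 1/2" using \<open>ts > 0\<close> by (simp add: r_def)
  define X where "X k = (if k < m then {-r..r} else {0::real})" for k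
  define K where "K = {x. \<forall>k. x k \<in> X k} \<inter> {x. vnorm m x \<le> r}"
  have "{x. \<forall>k. x k \<in> X k} = PiE UNIV X" by (auto simp: PiE_def Pi_def extensional_def)
  moreover have "compactin (product_topology (\<lambda>_. euclidean) UNIV) (PiE UNIV X)"
    by (subst compactin_PiE) (auto simp: X_def)
  ultimately have "compact {x. \<forall>k. x k \<in> X k}"
    by (simp add: euclidean_product_topology)
  moreover have "closed {x :: nat \<Rightarrow> real. vnorm m x \<le> r}"
    by (rule closed_Collect_le[OF continuous_vnorm continuous_on_const])
  ultimately have cK: "compact K" unfolding K_def by (rule compact_Int_closed)
  have uK: "\<bar>vdot m x (Tj j)\<bar> \<le> 1/2" if "x \<in> K" "j < n" for x j
  proof -
    have "\<bar>vdot m x (Tj j)\<bar> \<le> vnorm m x * ts" unfolding ts_def by (rule vdot_tstar[OF that(2)])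
    also have "\<dots> \<le> r * ts" using that(1) ts0 by (intro mult_right_mono) (auto simp: K_def)
    finally show ?thesis using rts by simp
  qed
  define L where "L x = - (\<Sum>j<n. ln (1 + vdot m x (Tj j)))" for x
  have contL: "continuous_on K L"
    unfolding L_def
  proof (intro continuous_intros ballI)
    fix x j assume "x \<in> K" "j \<in> {..<n}"
    thus "1 + vdot m x (Tj j) \<noteq> 0" using uK[of x j] by auto
  qed
  have "(\<lambda>_. 0) \<in> K" using r0 by (auto simp: K_def X_def vnorm_def)
  hence "K \<noteq> {}" by blast
  then obtain x0 where x0K: "x0 \<in> K" and x0min: "\<And>y. y \<in> K \<Longrightarrow> L x0 \<le> L y"
    using continuous_attains_inf[OF cK _ contL] by blast
  have "L x0 \<le> L (\<lambda>_. 0)" using x0min \<open>(\<lambda>_. 0) \<in> K\<close> by blast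
  hence Lx0: "L x0 \<le> 0" by (simp add: L_def vdot_def)
  define u where "u j = vdot m x0 (Tj j)" for j
  have uh: "\<bar>u j\<bar> \<le> 1/2" if "j < n" for j using uK[OF x0K that] by (simp add: u_def)
  have inner: "vnorm m x0 < r"
  proof (rule ccontr)
    assume "\<not> vnorm m x0 < r"
    hence vr: "vnorm m x0 = r" using x0K by (auto simp: K_def)
    have "(\<Sum>j<n. ln (1 + u j)) \<le> (\<Sum>j<n. u j - (u j)\<^sup>2 / 3)"
      by (intro sum_mono ln_upper uh) auto
    hence "L x0 \<ge> - (\<Sum>j<n. u j - (u j)\<^sup>2 / 3)"
      unfolding L_def u_def[symmetric] by simp
    also have "- (\<Sum>j<n. u j - (u j)\<^sup>2 / 3) = - (\<Sum>j<n. u j) + (\<Sum>j<n. (u j)\<^sup>2) / 3"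
      by (simp add: sum_subtractf sum_divide_distrib)
    also have "(\<Sum>j<n. u j) = real n * vdot m x0 (tbar n Tj)"
      unfolding u_def by (rule sum_vdot_tbar[OF n])
    also have "(\<Sum>j<n. (u j)\<^sup>2) = real n * qf m (Smat n Tj) x0"
      using n by (simp add: qf_Smat u_def)
    finally have L1: "L x0 \<ge> - (real n * vdot m x0 (tbar n Tj)) + real n * qf m (Smat n Tj) x0 / 3" .
    have f1: "vdot m x0 (tbar n Tj) \<le> r * tb" using vdot_CS'[of m x0 "tbar n Tj"] vr by (simp add: tb_def)
    have f2: "lam * r\<^sup>2 \<le> qf m (Smat n Tj) x0" using pd[of x0] vr by simp
    have "real n * vdot m x0 (tbar n Tj) \<le> real n * (r * tb)" using f1 by (rule mult_left_mono) simp
    moreover have "real n * (lam * r\<^sup>2) \<le> real n * qf m (Smat n Tj) x0" using f2 by (rule mult_left_mono) simp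
    moreover have "real n * (lam * r\<^sup>2 / 3 - r * tb) = - (real n * (r * tb)) + real n * (lam * r\<^sup>2) / 3"
      by (simp add: algebra_simps)
    ultimately have "L x0 \<ge> real n * (lam * r\<^sup>2 / 3 - r * tb)"
      using L1 by linarith
    moreover have "lam * r\<^sup>2 / 3 - r * tb > 0"
    proof -
      have "6 * tb * ts * r = 6 * tb * (r * ts)" by (simp add: mult_ac)
      hence e: "6 * tb * ts * r = 3 * tb" using rts by simp
      have "6 * tb * ts * r < lam * r" using small r0
        by (intro mult_strict_right_mono) (auto simp: tb_def ts_def)
      hence "lam * r > 3 * tb" using e by simp
      hence "r * (lam * r) > r * (3 * tb)" using r0 by simp
      thus ?thesis by (simp add: power2_eq_square algebra_simps)
    qed
    moreover have "real n > 0" using n by simp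
    ultimately have "L x0 > 0" using mult_pos_pos[of "real n" "lam * r\<^sup>2 / 3 - r * tb"] by linarith
    with Lx0 show False by simp
  qed
  have grad: "(\<Sum>j<n. Tj j k / (1 + u j)) = 0" if k: "k < m" for k
  proof -
    define d where "d = r - vnorm m x0"
    have d0: "d > 0" using inner by (simp add: d_def)
    define h where "h t = - (\<Sum>j<n. ln (1 + (u j + t * Tj j k)))" for t
    have pu: "1 + u j > 0" if "j < n" for j using uh[OF that] by linarith
    have "DERIV h 0 :> - (\<Sum>j<n. Tj j k / (1 + u j))"
      unfolding h_def using pu by (auto intro!: derivative_eq_intros sum.cong)
    moreover have "\<forall>t. \<bar>0 - t\<bar> < d \<longrightarrow> h 0 \<le> h t"
    proof (intro allI impI)
      fix t assume t: "\<bar>0 - t\<bar> < d"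
      define y where "y = (\<lambda>i. x0 i + t * (if i = k then 1 else 0))"
      have "vnorm m y \<le> vnorm m x0 + vnorm m (\<lambda>i. t * (if i = k then 1 else 0))"
        unfolding y_def by (rule vnorm_triangle)
      also have "vnorm m (\<lambda>i. t * (if i = k then 1 else 0)) = \<bar>t\<bar>"
        by (simp add: vnorm_scale vnorm_unit[OF k])
      finally have vy: "vnorm m y < r" using t by (simp add: d_def)
      have "y \<in> K"
        unfolding K_def
      proof (intro IntI CollectI allI)
        fix i
        show "y i \<in> X i"
        proof (cases "i < m")
          case True thus ?thesis using comp_le_vnorm[OF True, of y] vy by (auto simp: X_def abs_le_iff)
        next
          case False
          have "x0 i \<in> X i" using x0K by (simp add: K_def)
          thus ?thesis using False k by (simp add: X_def y_def)
        qed
      qed (use vy in simp)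
      hence "L x0 \<le> L y" by (rule x0min)
      moreover have "L y = h t" by (simp add: L_def h_def y_def vdot_shift[OF k] u_def)
      moreover have "L x0 = h 0" by (simp add: L_def h_def u_def)
      ultimately show "h 0 \<le> h t" by simp
    qed
    ultimately have "- (\<Sum>j<n. Tj j k / (1 + u j)) = 0" by (rule DERIV_local_min[OF _ d0])
    thus ?thesis by simp
  qed
  have "el_root m n Tj x0"
    unfolding el_root_def
  proof (intro conjI allI impI)
    have "x0 k = 0" if "k \<ge> m" for k
    proof -
      have "x0 k \<in> X k" using x0K by (simp add: K_def)
      thus ?thesis using that by (simp add: X_def)
    qed
    thus "x0 \<in> extvec m" by (simp add: extvec_def)
  next
    fix j assume "j < n" thus "0 < 1 + vdot m x0 (Tj j)" using uh[of j] by (simp add: u_def)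
  next
    fix k assume "k < m" thus "(\<Sum>j<n. Tj j k / (1 + vdot m x0 (Tj j))) = 0" using grad by (simp add: u_def)
  qed
  thus ?thesis by blast
qed


lemma mv_Smat:
  assumes "k < m"
  shows "mv m (Smat n Tj) z k = (\<Sum>j<n. Tj j k * vdot m z (Tj j)) / real n"
proof -
  have "mv m (Smat n Tj) z k = (\<Sum>l<m. \<Sum>j<n. Tj j k * (Tj j l * z l)) / real n"
    using assms by (simp add: mv_def Smat_def sum_divide_distrib sum_distrib_left sum_distrib_right mult_ac)
  also have "\<dots> = (\<Sum>j<n. Tj j k * vdot m z (Tj j)) / real n"
    by (subst sum.swap) (simp add: vdot_def sum_distrib_left mult_ac)
  finally show ?thesis .
qed

lemma root_tbar:
  assumes R: "el_root m n Tj z" and k: "k < m" and n: "n > 0"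
  shows "tbar n Tj k = mv m (Smat n Tj) z k
     - (\<Sum>j<n. Tj j k * ((vdot m z (Tj j))\<^sup>2 / (1 + vdot m z (Tj j)))) / real n"
proof -
  define u where "u j = vdot m z (Tj j)" for j
  have pos: "1 + u j > 0" if "j < n" for j using R that by (simp add: el_root_def u_def)
  have "(\<Sum>j<n. Tj j k / (1 + u j)) = 0" using R k by (simp add: el_root_def u_def)
  moreover have "Tj j k / (1 + u j) = Tj j k - Tj j k * u j + Tj j k * ((u j)\<^sup>2 / (1 + u j))"
    if "j < n" for j using pos[OF that] by (simp add: field_simps power2_eq_square)
  ultimately have "(\<Sum>j<n. Tj j k - Tj j k * u j + Tj j k * ((u j)\<^sup>2 / (1 + u j))) = 0"
    by (metis (no_types, lifting) lessThan_iff sum.cong)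
  hence "(\<Sum>j<n. Tj j k) = (\<Sum>j<n. Tj j k * u j) - (\<Sum>j<n. Tj j k * ((u j)\<^sup>2 / (1 + u j)))"
    by (simp add: sum.distrib sum_subtractf)
  hence "(\<Sum>j<n. Tj j k) / real n = (\<Sum>j<n. Tj j k * u j) / real n - (\<Sum>j<n. Tj j k * ((u j)\<^sup>2 / (1 + u j))) / real n"
    by (simp add: diff_divide_distrib)
  thus ?thesis using mv_Smat[OF k] by (simp add: tbar_def u_def)
qed

lemma sum_vdot_scaleR:
  fixes P :: "nat \<Rightarrow> 'b::real_vector"
  shows "(\<Sum>j<n. vdot m a (Tj j) *\<^sub>R P j) = (\<Sum>k<m. a k *\<^sub>R (\<Sum>j<n. Tj j k *\<^sub>R P j))"
proof -
  have "(\<Sum>j<n. vdot m a (Tj j) *\<^sub>R P j) = (\<Sum>j<n. \<Sum>k<m. a k *\<^sub>R (Tj j k *\<^sub>R P j))"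
    by (simp add: vdot_def scaleR_sum_left mult.commute)
  also have "\<dots> = (\<Sum>k<m. a k *\<^sub>R (\<Sum>j<n. Tj j k *\<^sub>R P j))"
    by (subst sum.swap) (simp add: scaleR_sum_right)
  finally show ?thesis .
qed

lemma norm_sum_CS:
  fixes V :: "nat \<Rightarrow> 'b::real_normed_vector"
  shows "norm (\<Sum>k<m. a k *\<^sub>R V k) \<le> vnorm m a * sqrt (\<Sum>k<m. (norm (V k))\<^sup>2)"
proof -
  have "norm (\<Sum>k<m. a k *\<^sub>R V k) \<le> (\<Sum>k<m. \<bar>a k\<bar> * \<bar>norm (V k)\<bar>)"
    using norm_sum[of "\<lambda>k. a k *\<^sub>R V k" "{..<m}"] by simp
  also have "\<dots> \<le> L2_set a {..<m} * L2_set (\<lambda>k. norm (V k)) {..<m}" by (rule L2_set_mult_ineq)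
  finally show ?thesis by (simp add: vnorm_L2 L2_set_def)
qed

lemma opnorm_nonneg: "0 \<le> opnorm m A"
proof (cases "m = 0")
  case True
  hence "{vnorm m (mv m A x) | x. vnorm m x \<le> 1} = {0}" by (auto simp: vnorm_def)
  thus ?thesis by (simp add: opnorm_def)
next
  case False
  hence "vnorm m (\<lambda>i. if i = 0 then 1 else 0) = 1" by (intro vnorm_unit) simp
  moreover have "vnorm m (mv m A (\<lambda>i. if i = 0 then 1 else 0)) \<le> opnorm m A * vnorm m (\<lambda>i. if i = 0 then 1 else 0)"
    by (rule opnorm_bound)
  ultimately have "vnorm m (mv m A (\<lambda>i. if i = 0 then 1 else 0)) \<le> opnorm m A" by simp
  thus ?thesis using vnorm_nonneg[of m "mv m A (\<lambda>i. if i = 0 then 1 else 0)"] by linarith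
qed

lemma root_vbound:
  assumes R: "el_root m n Tj z" and n: "n > 0" and c: "c > 0"
    and regl: "\<And>a. c * (vnorm m a)\<^sup>2 \<le> qf m W a"
    and small: "vnorm m z * tstar m n Tj \<le> 1/2"
  shows "c * vnorm m (\<lambda>k. z k - mv m (minv m W) (tbar n Tj) k)
     \<le> opnorm m (\<lambda>k l. Smat n Tj k l - W k l) * vnorm m z + 2 * tstar m n Tj * qf m (Smat n Tj) z"
proof -
  define v where "v = mv m (minv m W) (tbar n Tj)"
  define w where "w = (\<lambda>k. z k - v k)"
  define u where "u j = vdot m z (Tj j)" for j
  define ts where "ts = tstar m n Tj"
  define e3 where "e3 = opnorm m (\<lambda>k l. Smat n Tj k l - W k l)"
  define q where "q j = (u j)\<^sup>2 / (1 + u j)" for j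
  define r where "r k = (\<Sum>j<n. Tj j k * q j) / real n" for k
  have uh: "\<bar>u j\<bar> \<le> 1/2" if "j < n" for j
    using vdot_tstar[OF that, of m z Tj] small by (simp add: u_def)
  have pos: "1 + u j \<ge> 1/2" if "j < n" for j using uh[OF that] by linarith
  have Wv: "mv m W v k = tbar n Tj k" if "k < m" for k
    unfolding v_def by (rule mv_minv[OF minv_prop[OF c regl] that])
  have Ww: "mv m W w k = - mv m (\<lambda>k l. Smat n Tj k l - W k l) z k + r k" if k: "k < m" for k
  proof -
    have "mv m W w k = mv m W z k - mv m W v k"
      using k by (simp add: mv_def w_def right_diff_distrib sum_subtractf)
    also have "\<dots> = mv m W z k - mv m (Smat n Tj) z k + r k"
      using Wv[OF k] root_tbar[OF R k n] by (simp add: r_def q_def u_def)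
    also have "mv m (\<lambda>k l. Smat n Tj k l - W k l) z k = mv m (Smat n Tj) z k - mv m W z k"
      using k by (simp add: mv_def left_diff_distrib sum_subtractf)
    ultimately show ?thesis by simp
  qed
  have "c * (vnorm m w)\<^sup>2 \<le> qf m W w" by (rule regl)
  also have "qf m W w = - vdot m w (mv m (\<lambda>k l. Smat n Tj k l - W k l) z) + vdot m w r"
    unfolding qf_def vdot_def using Ww by (simp add: right_diff_distrib sum_subtractf)
  also have "- vdot m w (mv m (\<lambda>k l. Smat n Tj k l - W k l) z) \<le> vnorm m w * (e3 * vnorm m z)"
  proof -
    have "\<bar>vdot m w (mv m (\<lambda>k l. Smat n Tj k l - W k l) z)\<bar> \<le> vnorm m w * vnorm m (mv m (\<lambda>k l. Smat n Tj k l - W k l) z)"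
      by (rule vdot_CS)
    also have "\<dots> \<le> vnorm m w * (e3 * vnorm m z)"
      unfolding e3_def by (intro mult_left_mono opnorm_bound) simp
    finally show ?thesis by linarith
  qed
  also have "vdot m w r \<le> vnorm m w * (2 * ts * qf m (Smat n Tj) z)"
  proof -
    have "vdot m w r = (\<Sum>j<n. vdot m w (Tj j) * ((u j)\<^sup>2 / (1 + u j))) / real n"
    proof -
      have "vdot m w r = (\<Sum>k<m. \<Sum>j<n. w k * (Tj j k * q j)) / real n"
        by (simp add: vdot_def r_def sum_distrib_left sum_divide_distrib)
      also have "\<dots> = (\<Sum>j<n. vdot m w (Tj j) * q j) / real n"
        by (subst sum.swap) (simp add: vdot_def sum_distrib_left mult_ac)
      finally show ?thesis by (simp add: q_def)
    qed
    also have "\<dots> \<le> (\<Sum>j<n. vnorm m w * ts * (2 * (u j)\<^sup>2)) / real n"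
    proof (intro divide_right_mono sum_mono)
      fix j assume "j \<in> {..<n}"
      hence j: "j < n" by simp
      have a: "\<bar>vdot m w (Tj j)\<bar> \<le> vnorm m w * ts" unfolding ts_def by (rule vdot_tstar[OF j])
      have "(u j)\<^sup>2 / (1 + u j) \<le> (u j)\<^sup>2 / (1/2)"
        by (rule divide_left_mono) (use pos[OF j] in auto)
      hence b: "(u j)\<^sup>2 / (1 + u j) \<le> 2 * (u j)\<^sup>2" by simp
      have b0: "0 \<le> (u j)\<^sup>2 / (1 + u j)" using pos[OF j] by simp
      have "vdot m w (Tj j) * ((u j)\<^sup>2 / (1 + u j)) \<le> \<bar>vdot m w (Tj j)\<bar> * ((u j)\<^sup>2 / (1 + u j))"
        using b0 by (intro mult_right_mono) auto
      also have "\<dots> \<le> (vnorm m w * ts) * (2 * (u j)\<^sup>2)"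
        using a b b0 by (intro mult_mono) (auto simp: ts_def tstar_nonneg)
      finally show "vdot m w (Tj j) * ((u j)\<^sup>2 / (1 + u j)) \<le> vnorm m w * ts * (2 * (u j)\<^sup>2)" .
    qed simp
    also have "\<dots> = vnorm m w * (2 * ts * qf m (Smat n Tj) z)"
      by (simp add: qf_Smat u_def sum_distrib_left[symmetric] mult_ac)
    finally show ?thesis .
  qed
  finally have key: "c * (vnorm m w)\<^sup>2 \<le> vnorm m w * (e3 * vnorm m z + 2 * ts * qf m (Smat n Tj) z)"
    by (simp add: algebra_simps)
  have "c * vnorm m w \<le> e3 * vnorm m z + 2 * ts * qf m (Smat n Tj) z"
  proof (cases "vnorm m w = 0")
    case True
    have "0 \<le> e3" unfolding e3_def by (rule opnorm_nonneg)
    moreover have "0 \<le> qf m (Smat n Tj) z" using n by (simp add: qf_Smat sum_nonneg)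
    moreover have "0 \<le> ts" by (simp add: ts_def tstar_nonneg)
    ultimately have "0 \<le> e3 * vnorm m z + 2 * ts * qf m (Smat n Tj) z" by simp
    thus ?thesis using True by simp
  next
    case False
    hence vp: "vnorm m w > 0" using vnorm_nonneg[of m w] by linarith
    have "c * (vnorm m w)\<^sup>2 = vnorm m w * (c * vnorm m w)" by (simp add: power2_eq_square)
    hence "vnorm m w * (c * vnorm m w) \<le> vnorm m w * (e3 * vnorm m z + 2 * ts * qf m (Smat n Tj) z)"
      using key by linarith
    thus ?thesis using vp by (rule mult_left_le_imp_le)
  qed
  thus ?thesis unfolding w_def v_def e3_def ts_def .
qed


lemma qfS_bounds:
  assumes regl: "\<And>a. c * (vnorm m a)\<^sup>2 \<le> qf m W a" and regu: "\<And>a. qf m W a \<le> C * (vnorm m a)\<^sup>2"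
    and e: "opnorm m (\<lambda>k l. S k l - W k l) \<le> e"
  shows "(c - e) * (vnorm m a)\<^sup>2 \<le> qf m S a" "qf m S a \<le> (C + e) * (vnorm m a)\<^sup>2"
proof -
  have d: "qf m S a = qf m W a + qf m (\<lambda>k l. S k l - W k l) a" by (simp add: qf_diff)
  have "\<bar>qf m (\<lambda>k l. S k l - W k l) a\<bar> \<le> opnorm m (\<lambda>k l. S k l - W k l) * (vnorm m a)\<^sup>2"
    by (rule qf_opnorm)
  also have "\<dots> \<le> e * (vnorm m a)\<^sup>2" using e by (intro mult_right_mono) auto
  finally have h: "\<bar>qf m (\<lambda>k l. S k l - W k l) a\<bar> \<le> e * (vnorm m a)\<^sup>2" .
  show "(c - e) * (vnorm m a)\<^sup>2 \<le> qf m S a" using d h regl[of a] by (simp add: left_diff_distrib abs_le_iff)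
  show "qf m S a \<le> (C + e) * (vnorm m a)\<^sup>2" using d h regu[of a] by (simp add: distrib_right abs_le_iff)
qed

lemma avg_CS:
  assumes "n > 0"
  shows "(\<Sum>j<n. \<bar>a j\<bar> * \<bar>b j\<bar>) / real n \<le> sqrt ((\<Sum>j<n. (a j)\<^sup>2) / real n) * sqrt ((\<Sum>j<n. (b j)\<^sup>2) / real n)"
proof -
  have "(\<Sum>j<n. \<bar>a j\<bar> * \<bar>b j\<bar>) \<le> sqrt (\<Sum>j<n. (a j)\<^sup>2) * sqrt (\<Sum>j<n. (b j)\<^sup>2)"
    using L2_set_mult_ineq[of a b "{..<n}"] by (simp add: L2_set_def)
  hence "(\<Sum>j<n. \<bar>a j\<bar> * \<bar>b j\<bar>) / real n \<le> sqrt (\<Sum>j<n. (a j)\<^sup>2) * sqrt (\<Sum>j<n. (b j)\<^sup>2) / real n"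
    using assms by (simp add: divide_right_mono)
  also have "\<dots> = sqrt ((\<Sum>j<n. (a j)\<^sup>2) / real n) * sqrt ((\<Sum>j<n. (b j)\<^sup>2) / real n)"
  proof -
    have "sqrt (real n) * sqrt (real n) = real n" by simp
    thus ?thesis using assms by (simp add: real_sqrt_divide field_simps)
  qed
  finally show ?thesis .
qed

lemma norm_avg_le:
  fixes P :: "nat \<Rightarrow> 'b::real_normed_vector"
  assumes "n > 0"
  shows "norm ((\<Sum>j<n. a j *\<^sub>R P j) /\<^sub>R real n)
    \<le> sqrt ((\<Sum>j<n. (a j)\<^sup>2) / real n) * sqrt ((\<Sum>j<n. (norm (P j))\<^sup>2) / real n)"
proof -
  have "norm ((\<Sum>j<n. a j *\<^sub>R P j) /\<^sub>R real n) = norm (\<Sum>j<n. a j *\<^sub>R P j) / real n"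
    using assms by (simp add: divide_inverse mult.commute)
  also have "\<dots> \<le> (\<Sum>j<n. \<bar>a j\<bar> * \<bar>norm (P j)\<bar>) / real n"
    using norm_sum[of "\<lambda>j. a j *\<^sub>R P j" "{..<n}"] assms by (intro divide_right_mono) auto
  also have "\<dots> \<le> sqrt ((\<Sum>j<n. (a j)\<^sup>2) / real n) * sqrt ((\<Sum>j<n. (norm (P j))\<^sup>2) / real n)"
    using avg_CS[OF assms, of a "\<lambda>j. norm (P j)"] by simp
  finally show ?thesis .
qed

lemma expansion:
  fixes P X Ak :: "nat \<Rightarrow> 'b::real_normed_vector" and EE :: "nat \<Rightarrow> nat \<Rightarrow> 'b"
  assumes m: "m > 0" and n: "n > 0" and c: "c > 0"
    and regl: "\<And>a. c * (vnorm m a)\<^sup>2 \<le> qf m W a" and regu: "\<And>a. qf m W a \<le> C * (vnorm m a)\<^sup>2"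
    and e3: "opnorm m (\<lambda>k l. Smat n Tj k l - W k l) \<le> c/2"
    and R: "el_root m n Tj z"
    and small: "vnorm m z * tstar m n Tj \<le> 1/2"
    and Ak: "\<And>k. Ak k = (\<Sum>j<n. EE j k) /\<^sub>R real n"
  shows "norm ((\<Sum>j<n. P j /\<^sub>R (1 + vdot m z (Tj j))) /\<^sub>R real n - (\<Sum>j<n. P j) /\<^sub>R real n
            + (\<Sum>j<n. X j) /\<^sub>R real n)
     \<le> sqrt (\<Sum>k<m. (norm ((\<Sum>j<n. Tj j k *\<^sub>R P j - EE j k) /\<^sub>R real n))\<^sup>2) * vnorm m (tbar n Tj) / c
       + sqrt ((\<Sum>j<n. (norm (P j))\<^sup>2) / real n) * (sqrt (C + c/2) *
          ((opnorm m (\<lambda>k l. Smat n Tj k l - W k l) * vnorm m z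
             + 2 * tstar m n Tj * (C + c/2) * (vnorm m z)\<^sup>2) / c))
       + norm ((\<Sum>i<n. (\<Sum>k<m. mv m (minv m W) (Tj i) k *\<^sub>R Ak k) - X i) /\<^sub>R real n)
       + 2 * tstar m n Tj * vnorm m z * (sqrt (C + c/2) * vnorm m z) * sqrt ((\<Sum>j<n. (norm (P j))\<^sup>2) / real n)"
proof -
  define u where "u j = vdot m z (Tj j)" for j
  define ts where "ts = tstar m n Tj"
  define zz where "zz = vnorm m z"
  define e3v where "e3v = opnorm m (\<lambda>k l. Smat n Tj k l - W k l)"
  define Cp where "Cp = C + c/2"
  define P2 where "P2 = (\<Sum>j<n. (norm (P j))\<^sup>2) / real n"
  define G where "G k = (\<Sum>j<n. Tj j k *\<^sub>R P j) /\<^sub>R real n" for k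
  define D where "D k = (\<Sum>j<n. Tj j k *\<^sub>R P j - EE j k) /\<^sub>R real n" for k
  define B where "B = minv m W"
  define v where "v = mv m B (tbar n Tj)"
  define w where "w = (\<lambda>k. z k - v k)"
  define q where "q j = (u j)\<^sup>2 / (1 + u j)" for j
  define Rem where "Rem = (\<Sum>j<n. q j *\<^sub>R P j) /\<^sub>R real n"
  define b2v where "b2v = (\<Sum>i<n. (\<Sum>k<m. mv m B (Tj i) k *\<^sub>R Ak k) - X i) /\<^sub>R real n"
  define psb where "psb = (\<Sum>j<n. P j) /\<^sub>R real n"
  define chb where "chb = (\<Sum>j<n. X j) /\<^sub>R real n"
  have ts0: "ts \<ge> 0" by (simp add: ts_def tstar_nonneg)
  have P20: "P2 \<ge> 0" by (simp add: P2_def sum_nonneg)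
  have uh: "\<bar>u j\<bar> \<le> zz * ts" if "j < n" for j
    using vdot_tstar[OF that, of m z Tj] by (simp add: u_def zz_def ts_def)
  have pos: "1 + u j \<ge> 1/2" if "j < n" for j using uh[OF that] small by (simp add: zz_def ts_def)
  have pw: "P j /\<^sub>R (1 + u j) = P j - u j *\<^sub>R P j + q j *\<^sub>R P j" if "j < n" for j
  proof -
    have "inverse (1 + u j) = 1 - u j + q j"
      using pos[OF that] by (simp add: q_def field_simps power2_eq_square)
    thus ?thesis by (simp add: scaleR_left_distrib scaleR_left_diff_distrib)
  qed
  have "(\<Sum>j<n. P j /\<^sub>R (1 + u j)) = (\<Sum>j<n. P j - u j *\<^sub>R P j + q j *\<^sub>R P j)"
    using pw by (intro sum.cong) auto
  also have "\<dots> = (\<Sum>j<n. P j) - (\<Sum>j<n. u j *\<^sub>R P j) + (\<Sum>j<n. q j *\<^sub>R P j)"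
    by (simp add: sum.distrib sum_subtractf)
  also have "(\<Sum>j<n. u j *\<^sub>R P j) = (\<Sum>k<m. z k *\<^sub>R (\<Sum>j<n. Tj j k *\<^sub>R P j))"
    unfolding u_def by (rule sum_vdot_scaleR)
  finally have th1: "(\<Sum>j<n. P j /\<^sub>R (1 + u j)) =
      (\<Sum>j<n. P j) - (\<Sum>k<m. z k *\<^sub>R (\<Sum>j<n. Tj j k *\<^sub>R P j)) + (\<Sum>j<n. q j *\<^sub>R P j)" .
  have scsum: "(\<Sum>k<m. a k *\<^sub>R Y k) /\<^sub>R real n = (\<Sum>k<m. a k *\<^sub>R (Y k /\<^sub>R real n))"
    for a :: "nat \<Rightarrow> real" and Y :: "nat \<Rightarrow> 'b"
    by (simp add: scaleR_sum_right mult.commute)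
  have I: "(\<Sum>j<n. P j /\<^sub>R (1 + u j)) /\<^sub>R real n = psb - (\<Sum>k<m. z k *\<^sub>R G k) + Rem"
    unfolding th1 psb_def Rem_def G_def
    by (simp add: scaleR_right_diff_distrib scaleR_add_right scsum)
  have II: "G k = D k + Ak k" for k
    unfolding G_def D_def Ak by (simp add: sum_subtractf scaleR_right_diff_distrib)
  have vk: "v k = (\<Sum>i<n. mv m B (Tj i) k) / real n" if "k < m" for k
  proof -
    have "v k = (\<Sum>l<m. B k l * ((\<Sum>i<n. Tj i l) / real n))" using that by (simp add: v_def mv_def tbar_def)
    also have "\<dots> = (\<Sum>l<m. \<Sum>i<n. B k l * Tj i l) / real n"
      by (simp add: sum_divide_distrib sum_distrib_left)
    also have "\<dots> = (\<Sum>i<n. \<Sum>l<m. B k l * Tj i l) / real n" by (subst sum.swap) simp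
    also have "\<dots> = (\<Sum>i<n. mv m B (Tj i) k) / real n" using that by (simp add: mv_def)
    finally show ?thesis .
  qed
  have III: "(\<Sum>k<m. v k *\<^sub>R Ak k) = b2v + chb"
  proof -
    have "b2v = (\<Sum>i<n. \<Sum>k<m. mv m B (Tj i) k *\<^sub>R Ak k) /\<^sub>R real n - chb"
      by (simp add: b2v_def chb_def sum_subtractf scaleR_right_diff_distrib)
    also have "(\<Sum>i<n. \<Sum>k<m. mv m B (Tj i) k *\<^sub>R Ak k) = (\<Sum>k<m. (\<Sum>i<n. mv m B (Tj i) k) *\<^sub>R Ak k)"
      by (subst sum.swap) (simp add: scaleR_sum_left)
    also have "\<dots> /\<^sub>R real n = (\<Sum>k<m. v k *\<^sub>R Ak k)"
      by (simp add: scaleR_sum_right vk divide_inverse_commute)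
    finally show ?thesis by simp
  qed
  have zG: "(\<Sum>k<m. z k *\<^sub>R G k) = (\<Sum>k<m. w k *\<^sub>R G k) + (\<Sum>k<m. v k *\<^sub>R D k) + (\<Sum>k<m. v k *\<^sub>R Ak k)"
  proof -
    have "(\<Sum>k<m. z k *\<^sub>R G k) = (\<Sum>k<m. w k *\<^sub>R G k + (v k *\<^sub>R D k + v k *\<^sub>R Ak k))"
      by (intro sum.cong) (auto simp: w_def II scaleR_left_diff_distrib scaleR_add_right)
    thus ?thesis by (simp add: sum.distrib)
  qed
  have IV: "(\<Sum>j<n. P j /\<^sub>R (1 + u j)) /\<^sub>R real n - psb + chb
      = Rem - (\<Sum>k<m. w k *\<^sub>R G k) - (\<Sum>k<m. v k *\<^sub>R D k) - b2v"
    unfolding I zG III by (simp add: algebra_simps)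
  have N1: "norm (\<Sum>k<m. v k *\<^sub>R D k) \<le> sqrt (\<Sum>k<m. (norm (D k))\<^sup>2) * vnorm m (tbar n Tj) / c"
  proof -
    have "norm (\<Sum>k<m. v k *\<^sub>R D k) \<le> vnorm m v * sqrt (\<Sum>k<m. (norm (D k))\<^sup>2)" by (rule norm_sum_CS)
    also have "\<dots> \<le> vnorm m (tbar n Tj) / c * sqrt (\<Sum>k<m. (norm (D k))\<^sup>2)"
      unfolding v_def B_def by (intro mult_right_mono minv_bound[OF c regl]) (auto simp: sum_nonneg)
    finally show ?thesis by (simp add: mult.commute)
  qed
  have Sl: "qf m (Smat n Tj) a \<le> Cp * (vnorm m a)\<^sup>2" for a
    using qfS_bounds(2)[OF regl regu e3] by (simp add: Cp_def)
  have Cp0: "Cp \<ge> 0"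
  proof -
    have "vnorm m (\<lambda>i. if i = 0 then 1 else 0) = 1" using m by (intro vnorm_unit) simp
    thus ?thesis using regl[of "\<lambda>i. if i = 0 then 1 else 0"] regu[of "\<lambda>i. if i = 0 then 1 else 0"] c
      by (simp add: Cp_def)
  qed
  have sqS: "sqrt (qf m (Smat n Tj) a) \<le> sqrt Cp * vnorm m a" for a
  proof -
    have "sqrt (qf m (Smat n Tj) a) \<le> sqrt (Cp * (vnorm m a)\<^sup>2)" by (rule real_sqrt_le_mono[OF Sl])
    also have "\<dots> = sqrt Cp * vnorm m a" by (simp add: real_sqrt_mult)
    finally show ?thesis .
  qed
  have wG: "(\<Sum>k<m. w k *\<^sub>R G k) = (\<Sum>j<n. vdot m w (Tj j) *\<^sub>R P j) /\<^sub>R real n"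
    unfolding G_def by (simp add: sum_vdot_scaleR scsum)
  have N2: "norm (\<Sum>k<m. w k *\<^sub>R G k) \<le> sqrt P2 * (sqrt Cp * ((e3v * zz + 2 * ts * Cp * zz\<^sup>2) / c))"
  proof -
    have "norm (\<Sum>k<m. w k *\<^sub>R G k) \<le> sqrt ((\<Sum>j<n. (vdot m w (Tj j))\<^sup>2) / real n) * sqrt P2"
      unfolding wG P2_def by (rule norm_avg_le[OF n])
    also have "(\<Sum>j<n. (vdot m w (Tj j))\<^sup>2) / real n = qf m (Smat n Tj) w" by (simp add: qf_Smat)
    also have "sqrt (qf m (Smat n Tj) w) * sqrt P2 \<le> (sqrt Cp * vnorm m w) * sqrt P2"
      by (intro mult_right_mono sqS) (simp add: P20)
    also have "vnorm m w \<le> (e3v * zz + 2 * ts * Cp * zz\<^sup>2) / c"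
    proof -
      have "c * vnorm m w \<le> e3v * zz + 2 * ts * qf m (Smat n Tj) z"
        using root_vbound[OF R n c regl small] by (simp add: w_def v_def B_def e3v_def zz_def ts_def)
      also have "\<dots> \<le> e3v * zz + 2 * ts * (Cp * zz\<^sup>2)"
        using Sl[of z] ts0 by (simp add: zz_def mult_left_mono)
      finally show ?thesis using c by (simp add: field_simps)
    qed
    hence "(sqrt Cp * vnorm m w) * sqrt P2 \<le> (sqrt Cp * ((e3v * zz + 2 * ts * Cp * zz\<^sup>2) / c)) * sqrt P2"
      by (intro mult_right_mono mult_left_mono) (auto simp: P20 Cp0)
    finally show ?thesis by (simp add: mult_ac)
  qed
  have N3: "norm Rem \<le> 2 * ts * zz * (sqrt Cp * zz) * sqrt P2"
  proof -
    have "norm Rem = norm (\<Sum>j<n. q j *\<^sub>R P j) / real n" using n by (simp add: Rem_def divide_inverse_commute)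
    also have "\<dots> \<le> (\<Sum>j<n. (2 * ts * zz) * (\<bar>u j\<bar> * \<bar>norm (P j)\<bar>)) / real n"
    proof (intro divide_right_mono order.trans[OF norm_sum] sum_mono)
      fix j assume "j \<in> {..<n}"
      hence j: "j < n" by simp
      have q0: "0 \<le> q j" using pos[OF j] by (simp add: q_def)
      have "q j \<le> (u j)\<^sup>2 / (1/2)" unfolding q_def by (rule divide_left_mono) (use pos[OF j] in auto)
      also have "\<dots> = 2 * (\<bar>u j\<bar> * \<bar>u j\<bar>)" by (simp add: power2_eq_square abs_mult_self_eq)
      also have "\<dots> \<le> 2 * ((zz * ts) * \<bar>u j\<bar>)" using uh[OF j] by (intro mult_left_mono mult_right_mono) auto
      finally have "q j \<le> 2 * ts * zz * \<bar>u j\<bar>" by (simp add: mult_ac)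
      hence "q j * norm (P j) \<le> (2 * ts * zz * \<bar>u j\<bar>) * norm (P j)"
        by (rule mult_right_mono) simp
      thus "norm (q j *\<^sub>R P j) \<le> (2 * ts * zz) * (\<bar>u j\<bar> * \<bar>norm (P j)\<bar>)"
        using q0 by (simp add: mult.assoc)
    qed simp
    also have "\<dots> = (2 * ts * zz) * ((\<Sum>j<n. \<bar>u j\<bar> * \<bar>norm (P j)\<bar>) / real n)"
      by (simp add: sum_distrib_left)
    also have "\<dots> \<le> (2 * ts * zz) * (sqrt ((\<Sum>j<n. (u j)\<^sup>2) / real n) * sqrt P2)"
      unfolding P2_def using avg_CS[OF n, of u "\<lambda>j. norm (P j)"] ts0
      by (intro mult_left_mono) (auto simp: zz_def)
    also have "(\<Sum>j<n. (u j)\<^sup>2) / real n = qf m (Smat n Tj) z" by (simp add: qf_Smat u_def)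
    also have "(2 * ts * zz) * (sqrt (qf m (Smat n Tj) z) * sqrt P2) \<le> (2 * ts * zz) * ((sqrt Cp * zz) * sqrt P2)"
      using sqS[of z] ts0 by (intro mult_left_mono mult_right_mono) (auto simp: zz_def P20)
    finally show ?thesis by (simp add: mult_ac)
  qed
  have t1: "norm (Rem - (\<Sum>k<m. w k *\<^sub>R G k) - (\<Sum>k<m. v k *\<^sub>R D k) - b2v)
      \<le> norm (Rem - (\<Sum>k<m. w k *\<^sub>R G k) - (\<Sum>k<m. v k *\<^sub>R D k)) + norm b2v"
    by (rule norm_triangle_ineq4)
  have t2: "norm (Rem - (\<Sum>k<m. w k *\<^sub>R G k) - (\<Sum>k<m. v k *\<^sub>R D k))
      \<le> norm (Rem - (\<Sum>k<m. w k *\<^sub>R G k)) + norm (\<Sum>k<m. v k *\<^sub>R D k)"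
    by (rule norm_triangle_ineq4)
  have t3: "norm (Rem - (\<Sum>k<m. w k *\<^sub>R G k)) \<le> norm Rem + norm (\<Sum>k<m. w k *\<^sub>R G k)"
    by (rule norm_triangle_ineq4)
  have key: "norm ((\<Sum>j<n. P j /\<^sub>R (1 + u j)) /\<^sub>R real n - psb + chb)
     \<le> sqrt (\<Sum>k<m. (norm (D k))\<^sup>2) * vnorm m (tbar n Tj) / c
       + sqrt P2 * (sqrt Cp * ((e3v * zz + 2 * ts * Cp * zz\<^sup>2) / c))
       + norm b2v
       + 2 * ts * zz * (sqrt Cp * zz) * sqrt P2"
    unfolding IV using t1 t2 t3 N1 N2 N3 by linarith
  show ?thesis using key
    unfolding u_def psb_def chb_def D_def P2_def Cp_def e3v_def ts_def zz_def b2v_def B_def .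
qed


lemma small_cover:
  assumes Bsub: "\<And>n. B n \<subseteq> space M"
    and H: "\<And>\<delta>. \<delta> > 0 \<Longrightarrow> eventually (\<lambda>n. \<exists>A\<in>sets M. measure M A \<le> \<delta> \<and> B n \<subseteq> A) sequentially"
  shows "\<exists>A. (\<forall>n. A n \<in> sets M \<and> B n \<subseteq> A n) \<and> ((\<lambda>n. measure M (A n)) \<longlonglongrightarrow> 0)"
proof -
  define F where "F n = {measure M A | A. A \<in> sets M \<and> B n \<subseteq> A}" for n
  define f where "f n = Inf (F n)" for n
  have Fne: "F n \<noteq> {}" for n using Bsub[of n] by (auto simp: F_def)
  have Fbdd: "bdd_below (F n)" for n unfolding F_def bdd_below_def by (rule exI[of _ 0]) auto
  have "\<exists>A. A \<in> sets M \<and> B n \<subseteq> A \<and> measure M A < f n + 1 / (real n + 1)" for n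
  proof -
    have "Inf (F n) < f n + 1 / (real n + 1)" by (simp add: f_def)
    from cInf_lessD[OF Fne this] show ?thesis by (auto simp: F_def)
  qed
  then obtain A where A: "\<And>n. A n \<in> sets M" "\<And>n. B n \<subseteq> A n"
    "\<And>n. measure M (A n) < f n + 1 / (real n + 1)" by metis
  have "(\<lambda>n. measure M (A n)) \<longlonglongrightarrow> 0"
  proof (rule LIMSEQ_I)
    fix r :: real assume r: "r > 0"
    have "eventually (\<lambda>n. \<exists>A\<in>sets M. measure M A \<le> r/2 \<and> B n \<subseteq> A) sequentially" using r by (intro H) simp
    then obtain N1 where N1: "\<And>n. n \<ge> N1 \<Longrightarrow> \<exists>A\<in>sets M. measure M A \<le> r/2 \<and> B n \<subseteq> A"
      by (auto simp: eventually_sequentially)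
    obtain N2 :: nat where N2: "2 / r < real N2" using reals_Archimedean2 by blast
    show "\<exists>no. \<forall>n\<ge>no. norm (measure M (A n) - 0) < r"
    proof (intro exI allI impI)
      fix n assume n: "n \<ge> max N1 N2"
      then obtain A' where A': "A' \<in> sets M" "measure M A' \<le> r/2" "B n \<subseteq> A'" using N1 by auto
      have "f n \<le> measure M A'" unfolding f_def using A' Fbdd by (intro cInf_lower) (auto simp: F_def)
      hence fn: "f n \<le> r/2" using A' by simp
      have "real N2 \<le> real n" using n by simp
      hence "2 / r < real n + 1" using N2 by simp
      hence "1 / (real n + 1) < r / 2" using r by (simp add: field_simps)
      thus "norm (measure M (A n) - 0) < r" using A(3)[of n] fn by simp
    qed
  qed
  thus ?thesis using A by blast
qed

lemma markov_avg:
  fixes Y :: "nat \<Rightarrow> 'a \<Rightarrow> real"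
  assumes P: "prob_space M"
    and meas: "\<And>j. Y j \<in> borel_measurable M"
    and int: "\<And>j. integrable M (Y j)"
    and nonneg: "\<And>j x. 0 \<le> Y j x"
    and I: "\<And>j. integral\<^sup>L M (Y j) = I"
    and d: "\<delta> > 0"
  shows "\<exists>K\<ge>0. \<forall>n>0. \<exists>A\<in>sets M. measure M A \<le> \<delta> \<and>
     {\<omega>\<in>space M. (\<Sum>j<n. Y j \<omega>) / real n > K} \<subseteq> A"
proof -
  have I0: "I \<ge> 0" using I[of 0] nonneg integral_nonneg_AE[of "Y 0" M] by (metis AE_I2)
  define K where "K = I / \<delta> + 1"
  have K0: "K > 0" using I0 d by (simp add: K_def add_nonneg_pos)
  show ?thesis
  proof (intro exI[of _ K] conjI allI impI)
    show "K \<ge> 0" using K0 by simp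
    fix n :: nat assume n: "n > 0"
    define u where "u \<omega> = (\<Sum>j<n. Y j \<omega>) / real n" for \<omega>
    have um: "u \<in> borel_measurable M" unfolding u_def using meas by measurable
    have ui: "integrable M u" unfolding u_def using int by (intro integrable_divide integrable_sum) auto
    have uI: "integral\<^sup>L M u = I"
      unfolding u_def using int n by (simp add: integral_sum I)
    have Aset: "{\<omega>\<in>space M. u \<omega> \<ge> K} \<in> sets M" using um by measurable
    have un: "0 \<le> u x" for x by (simp add: u_def sum_nonneg nonneg)
    have "measure M {\<omega>\<in>space M. u \<omega> \<ge> K} \<le> integral\<^sup>L M u / K"
      by (rule integral_Markov_inequality_measure[OF ui Aset AE_I2[OF un] K0])
    also have "\<dots> \<le> \<delta>" using uI K0 d I0 by (simp add: K_def field_simps)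
    finally show "\<exists>A\<in>sets M. measure M A \<le> \<delta> \<and> {\<omega>\<in>space M. (\<Sum>j<n. Y j \<omega>) / real n > K} \<subseteq> A"
      using Aset by (intro bexI[of _ "{\<omega>\<in>space M. u \<omega> \<ge> K}"]) (auto simp: u_def)
  qed
qed


lemma div_rho: "0 \<le> x \<Longrightarrow> (1::real) \<le> \<rho> \<Longrightarrow> x / \<rho> \<le> x"
proof -
  assume x: "0 \<le> x" and r: "1 \<le> \<rho>"
  have "x / \<rho> \<le> x / 1" using x r by (intro divide_left_mono) auto
  thus ?thesis by simp
qed

lemma final_arith:
  fixes c K2 K6 Cp \<eta> \<rho> s tb ts e3 b1 b2 P2 zz :: real
  assumes c: "c > 0" and K2: "K2 \<ge> 0" and K6: "K6 \<ge> 0" and Cp: "Cp \<ge> 0" and eta: "\<eta> \<ge> 0"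
    and rho: "\<rho> \<ge> 1" and s: "s > 0"
    and tb: "0 \<le> tb" "tb \<le> K2 * \<rho> / s"
    and ts: "0 \<le> ts" "ts \<le> \<eta> * s / \<rho>^3"
    and e3: "0 \<le> e3" "e3 \<le> \<eta> / \<rho>\<^sup>2"
    and b1: "0 \<le> b1" "b1 \<le> \<eta> / \<rho>"
    and b2: "b2 \<le> \<eta> / s"
    and P2: "0 \<le> P2" "P2 \<le> K6"
    and zz: "0 \<le> zz" "zz \<le> 3 * tb / c"
  shows "b1 * tb / c + sqrt P2 * (sqrt Cp * ((e3 * zz + 2 * ts * Cp * zz\<^sup>2) / c)) + b2
           + 2 * ts * zz * (sqrt Cp * zz) * sqrt P2
         \<le> \<eta> * (K2 / c + sqrt K6 * (sqrt Cp * ((3 * K2 / c + 18 * Cp * K2\<^sup>2 / c\<^sup>2) / c)) + 1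
               + 18 * K2\<^sup>2 * sqrt Cp * sqrt K6 / c\<^sup>2) / s"
proof -
  define Zb where "Zb = 3 * K2 * \<rho> / (c * s)"
  have rho0: "\<rho> > 0" using rho by simp
  have zzb: "zz \<le> Zb"
  proof -
    have "3 * tb / c \<le> 3 * (K2 * \<rho> / s) / c" using tb c by (intro divide_right_mono) auto
    moreover have "3 * (K2 * \<rho> / s) / c = Zb" using c s by (simp add: Zb_def field_simps)
    ultimately show ?thesis using zz by linarith
  qed
  have Zb0: "Zb \<ge> 0" using K2 c s rho0 by (simp add: Zb_def)
  have T1: "b1 * tb / c \<le> \<eta> * K2 / (c * s)"
  proof -
    have "b1 * tb \<le> (\<eta> / \<rho>) * (K2 * \<rho> / s)" using b1 tb by (intro mult_mono) auto
    also have "\<dots> = \<eta> * K2 / s" using rho0 by (simp add: field_simps)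
    finally show ?thesis using c by (simp add: divide_right_mono field_simps)
  qed
  have E1: "e3 * zz \<le> 3 * \<eta> * K2 / (c * s)"
  proof -
    have "e3 * zz \<le> (\<eta> / \<rho>\<^sup>2) * Zb" using e3 zz zzb by (intro mult_mono) auto
    also have "\<dots> = (3 * \<eta> * K2 / (c * s)) / \<rho>" using rho0 by (simp add: Zb_def field_simps power2_eq_square)
    also have "\<dots> \<le> 3 * \<eta> * K2 / (c * s)"
      using div_rho[OF _ rho, of "3 * \<eta> * K2 / (c * s)"] eta K2 c s by simp
    finally show ?thesis .
  qed
  have E2: "ts * zz\<^sup>2 \<le> 9 * \<eta> * K2\<^sup>2 / (c\<^sup>2 * s)"
  proof -
    have "zz\<^sup>2 \<le> Zb\<^sup>2" using zz zzb by (intro power_mono) auto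
    hence "ts * zz\<^sup>2 \<le> (\<eta> * s / \<rho>^3) * Zb\<^sup>2" using ts by (intro mult_mono) auto
    also have "\<dots> = (9 * \<eta> * K2\<^sup>2 / (c\<^sup>2 * s)) / \<rho>" using rho0 s c
      by (simp add: Zb_def field_simps power2_eq_square power3_eq_cube)
    also have "\<dots> \<le> 9 * \<eta> * K2\<^sup>2 / (c\<^sup>2 * s)"
      using div_rho[OF _ rho, of "9 * \<eta> * K2\<^sup>2 / (c\<^sup>2 * s)"] eta c s by simp
    finally show ?thesis .
  qed
  have sP: "sqrt P2 \<le> sqrt K6" using P2 by simp
  have inner: "(e3 * zz + 2 * ts * Cp * zz\<^sup>2) / c \<le> \<eta> * ((3 * K2 / c + 18 * Cp * K2\<^sup>2 / c\<^sup>2) / c) / s"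
  proof -
    have "e3 * zz + 2 * ts * Cp * zz\<^sup>2 = e3 * zz + 2 * Cp * (ts * zz\<^sup>2)" by (simp add: mult_ac)
    also have "\<dots> \<le> 3 * \<eta> * K2 / (c * s) + 2 * Cp * (9 * \<eta> * K2\<^sup>2 / (c\<^sup>2 * s))"
      using E1 E2 Cp by (intro add_mono mult_left_mono) auto
    also have "\<dots> = \<eta> * (3 * K2 / c + 18 * Cp * K2\<^sup>2 / c\<^sup>2) / s" using c s
      by (simp add: field_simps power2_eq_square)
    finally have h: "e3 * zz + 2 * ts * Cp * zz\<^sup>2 \<le> \<eta> * (3 * K2 / c + 18 * Cp * K2\<^sup>2 / c\<^sup>2) / s" .
    have "(e3 * zz + 2 * ts * Cp * zz\<^sup>2) / c \<le> (\<eta> * (3 * K2 / c + 18 * Cp * K2\<^sup>2 / c\<^sup>2) / s) / c"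
      using h c by (intro divide_right_mono) auto
    also have "\<dots> = \<eta> * ((3 * K2 / c + 18 * Cp * K2\<^sup>2 / c\<^sup>2) / c) / s" by simp
    finally show ?thesis .
  qed
  have inner0: "0 \<le> (e3 * zz + 2 * ts * Cp * zz\<^sup>2) / c" using e3 zz ts Cp c by simp
  have T2: "sqrt P2 * (sqrt Cp * ((e3 * zz + 2 * ts * Cp * zz\<^sup>2) / c))
      \<le> sqrt K6 * (sqrt Cp * (\<eta> * ((3 * K2 / c + 18 * Cp * K2\<^sup>2 / c\<^sup>2) / c) / s))"
    using sP inner inner0 Cp K6 by (intro mult_mono mult_left_mono mult_nonneg_nonneg) auto
  have T4: "2 * ts * zz * (sqrt Cp * zz) * sqrt P2 \<le> 2 * (9 * \<eta> * K2\<^sup>2 / (c\<^sup>2 * s)) * sqrt Cp * sqrt K6"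
  proof -
    have "2 * ts * zz * (sqrt Cp * zz) * sqrt P2 = 2 * (ts * zz\<^sup>2) * sqrt Cp * sqrt P2"
      by (simp add: power2_eq_square mult_ac)
    also have "\<dots> \<le> 2 * (9 * \<eta> * K2\<^sup>2 / (c\<^sup>2 * s)) * sqrt Cp * sqrt K6"
      using E2 sP ts zz eta K2 c s Cp P2 by (intro mult_mono mult_right_mono mult_nonneg_nonneg) auto
    finally show ?thesis .
  qed
  have "b1 * tb / c + sqrt P2 * (sqrt Cp * ((e3 * zz + 2 * ts * Cp * zz\<^sup>2) / c)) + b2
           + 2 * ts * zz * (sqrt Cp * zz) * sqrt P2
      \<le> \<eta> * K2 / (c * s) + sqrt K6 * (sqrt Cp * (\<eta> * ((3 * K2 / c + 18 * Cp * K2\<^sup>2 / c\<^sup>2) / c) / s))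
         + \<eta> / s + 2 * (9 * \<eta> * K2\<^sup>2 / (c\<^sup>2 * s)) * sqrt Cp * sqrt K6"
    using T1 T2 b2 T4 by linarith
  also have "\<dots> = \<eta> * (K2 / c + sqrt K6 * (sqrt Cp * ((3 * K2 / c + 18 * Cp * K2\<^sup>2 / c\<^sup>2) / c)) + 1
               + 18 * K2\<^sup>2 * sqrt Cp * sqrt K6 / c\<^sup>2) / s"
    using c s by (simp add: field_simps)
  finally show ?thesis .
qed


lemma outside: "{\<omega>\<in>space M. f \<omega> > b} \<subseteq> A \<Longrightarrow> \<omega> \<in> space M \<Longrightarrow> \<omega> \<notin> A \<Longrightarrow> f \<omega> \<le> (b::real)"
  by (auto simp: not_less[symmetric])

lemma o_pD:
  assumes "o_p M X r" "\<epsilon> > 0" "\<delta> > 0"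
  shows "eventually (\<lambda>n. \<exists>A\<in>sets M. measure M A \<le> \<delta> \<and> {\<omega>\<in>space M. norm (X n \<omega>) > \<epsilon> * r n} \<subseteq> A) sequentially"
  using assms unfolding o_p_def by blast

lemma O_pD:
  assumes "O_p M X r" "\<And>n. r n \<ge> 0" "\<delta> > 0"
  shows "\<exists>K\<ge>1. eventually (\<lambda>n. \<exists>A\<in>sets M. measure M A \<le> \<delta> \<and> {\<omega>\<in>space M. norm (X n \<omega>) > K * r n} \<subseteq> A) sequentially"
proof -
  obtain K where K: "eventually (\<lambda>n. \<exists>A\<in>sets M. measure M A \<le> \<delta> \<and> {\<omega>\<in>space M. norm (X n \<omega>) > K * r n} \<subseteq> A) sequentially"
    using assms unfolding O_p_def by blast
  have "eventually (\<lambda>n. \<exists>A\<in>sets M. measure M A \<le> \<delta> \<and> {\<omega>\<in>space M. norm (X n \<omega>) > max K 1 * r n} \<subseteq> A) sequentially"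
  proof (rule eventually_mono[OF K])
    fix n assume "\<exists>A\<in>sets M. measure M A \<le> \<delta> \<and> {\<omega>\<in>space M. norm (X n \<omega>) > K * r n} \<subseteq> A"
    then obtain A where A: "A \<in> sets M" "measure M A \<le> \<delta>" "{\<omega>\<in>space M. norm (X n \<omega>) > K * r n} \<subseteq> A" by blast
    have "K * r n \<le> max K 1 * r n" using assms(2)[of n] by (intro mult_right_mono) auto
    hence "{\<omega>\<in>space M. norm (X n \<omega>) > max K 1 * r n} \<subseteq> A" using A(3) by auto
    thus "\<exists>A\<in>sets M. measure M A \<le> \<delta> \<and> {\<omega>\<in>space M. norm (X n \<omega>) > max K 1 * r n} \<subseteq> A"
      using A by blast
  qed
  thus ?thesis by (intro exI[of _ "max K 1"]) auto
qed

lemma powr_m32: "x > 0 \<Longrightarrow> x powr (-3/2) = 1 / (x * sqrt x)"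
proof -
  assume x: "x > 0"
  have "x powr (3/2) = x powr (1 + 1/2)" by simp
  also have "\<dots> = x powr 1 * x powr (1/2)" by (rule powr_add)
  also have "\<dots> = x * sqrt x" using x by (simp add: powr_half_sqrt)
  finally have "x powr (3/2) = x * sqrt x" .
  moreover have "x powr (-3/2) = 1 / x powr (3/2)" using x by (simp add: powr_minus_divide)
  ultimately show ?thesis by simp
qed

theorem theorem5:
  fixes M :: "'a measure" and Q :: "'z measure"
    and Z :: "nat \<Rightarrow> 'a \<Rightarrow> 'z"
    and psi chi :: "'z \<Rightarrow> 'b::euclidean_space"
    and m :: "nat \<Rightarrow> nat"
    and T :: "nat \<Rightarrow> nat \<Rightarrow> 'a \<Rightarrow> nat \<Rightarrow> real"
    and W :: "nat \<Rightarrow> nat \<Rightarrow> nat \<Rightarrow> real"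
  assumes P: "prob_space M"
    and Zmeas: "\<forall>j. Z j \<in> measurable M Q"
    and Zdist: "\<forall>j. distr M Q (Z j) = Q"
    and Zindep: "prob_space.indep_vars M (\<lambda>_. Q) Z UNIV"
    and psi_meas: "psi \<in> borel_measurable Q"
    and psi_sq: "integrable Q (\<lambda>z. (norm (psi z))\<^sup>2)"
    and m_lim: "filterlim m at_top sequentially"
    and Tmeas: "\<forall>n. \<forall>j<n. \<forall>k<m n. (\<lambda>\<omega>. T n j \<omega> k) \<in> borel_measurable M"
    and Tint: "\<forall>n. \<forall>j<n. \<forall>k<m n. integrable M (\<lambda>\<omega>. T n j \<omega> k *\<^sub>R psi (Z j \<omega>))"
    and A1: "o_p M (\<lambda>n \<omega>. Max (insert 0 ((\<lambda>j. vnorm (m n) (T n j \<omega>)) ` {..<n})))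
               (\<lambda>n. real (m n) powr (-3/2) * sqrt (real n))"
    and A2: "O_p M (\<lambda>n \<omega>. vnorm (m n) (\<lambda>k. (\<Sum>j<n. T n j \<omega> k) / real n))
               (\<lambda>n. sqrt (real (m n)) / sqrt (real n))"
    and A3_reg: "regular_disp m W"
    and A3: "o_p M (\<lambda>n \<omega>. opnorm (m n)
                  (\<lambda>k l. (\<Sum>j<n. T n j \<omega> k * T n j \<omega> l) / real n - W n k l))
               (\<lambda>n. 1 / real (m n))"
    and B1: "o_p M (\<lambda>n \<omega>. sqrt (\<Sum>k<m n. (norm ((\<Sum>j<n. T n j \<omega> k *\<^sub>R psi (Z j \<omega>)
                   - integral\<^sup>L M (\<lambda>\<omega>'. T n j \<omega>' k *\<^sub>R psi (Z j \<omega>'))) /\<^sub>R real n))\<^sup>2))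
               (\<lambda>n. 1 / sqrt (real (m n)))"
    and chi_meas: "chi \<in> borel_measurable Q"
    and chi_int: "integrable Q chi"
    and chi_mean: "integral\<^sup>L Q chi = 0"
    and chi_sq: "integrable Q (\<lambda>z. (norm (chi z))\<^sup>2)"
    and B2: "o_p M (\<lambda>n \<omega>. (\<Sum>i<n. (\<Sum>k<m n. mv (m n) (minv (m n) (W n)) (T n i \<omega>) k *\<^sub>R
                   ((\<Sum>j<n. integral\<^sup>L M (\<lambda>\<omega>'. T n j \<omega>' k *\<^sub>R psi (Z j \<omega>'))) /\<^sub>R real n))
                   - chi (Z i \<omega>)) /\<^sub>R real n)
               (\<lambda>n. 1 / sqrt (real n))"
  shows "\<exists>E. (\<forall>n. E n \<in> sets M) \<and> ((\<lambda>n. measure M (E n)) \<longlonglongrightarrow> 1) \<and>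
     (\<forall>n. \<forall>\<omega>\<in>E n. \<exists>!zeta. el_root (m n) n (\<lambda>j. T n j \<omega>) zeta) \<and>
     o_p M (\<lambda>n \<omega>. if \<omega> \<in> E n then
         (let zeta = (THE zeta. el_root (m n) n (\<lambda>j. T n j \<omega>) zeta) in
           (\<Sum>j<n. psi (Z j \<omega>) /\<^sub>R (1 + vdot (m n) zeta (T n j \<omega>))) /\<^sub>R real n
           - (\<Sum>j<n. psi (Z j \<omega>)) /\<^sub>R real n + (\<Sum>j<n. chi (Z j \<omega>)) /\<^sub>R real n)
       else 0) (\<lambda>n. 1 / sqrt (real n))"
proof -
  interpret prob_space M by (rule P)
  obtain c C where c: "c > 0" and reg: "\<And>n a. vnorm (m n) a = 1 \<Longrightarrow>
      c \<le> (\<Sum>i<m n. \<Sum>j<m n. a i * W n i j * a j) \<and> (\<Sum>i<m n. \<Sum>j<m n. a i * W n i j * a j) \<le> C"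
    using A3_reg unfolding regular_disp_def by blast
  have regl: "c * (vnorm (m n) a)\<^sup>2 \<le> qf (m n) (W n) a" for n a
    using reg_bounds[of "m n" c "W n" C a] reg by blast
  have regu: "qf (m n) (W n) a \<le> C * (vnorm (m n) a)\<^sup>2" for n a
    using reg_bounds[of "m n" c "W n" C a] reg by blast
  have ev_m: "eventually (\<lambda>n. 1 \<le> m n) sequentially" using m_lim by (simp add: filterlim_at_top)
  have cC: "c \<le> C"
  proof -
    obtain N where "\<forall>n\<ge>N. 1 \<le> m n" using ev_m by (auto simp: eventually_sequentially)
    hence "1 \<le> m N" by simp
    hence "vnorm (m N) (\<lambda>i. if i = 0 then 1 else 0) = 1" by (intro vnorm_unit) simp
    from reg[OF this] show ?thesis by linarith
  qed
  define ts where "ts n \<omega> = tstar (m n) n (\<lambda>j. T n j \<omega>)" for n \<omega>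
  define tb where "tb n \<omega> = vnorm (m n) (tbar n (\<lambda>j. T n j \<omega>))" for n \<omega>
  define e3 where "e3 n \<omega> = opnorm (m n) (\<lambda>k l. Smat n (\<lambda>j. T n j \<omega>) k l - W n k l)" for n \<omega>
  have ts_eq: "(\<lambda>n \<omega>. Max (insert 0 ((\<lambda>j. vnorm (m n) (T n j \<omega>)) ` {..<n}))) = ts"
    by (simp add: fun_eq_iff ts_def tstar_def)
  have tb_eq: "(\<lambda>n \<omega>. vnorm (m n) (\<lambda>k. (\<Sum>j<n. T n j \<omega> k) / real n)) = tb"
    by (simp add: fun_eq_iff tb_def tbar_def)
  have e3_eq: "(\<lambda>n \<omega>. opnorm (m n) (\<lambda>k l. (\<Sum>j<n. T n j \<omega> k * T n j \<omega> l) / real n - W n k l)) = e3"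
    by (simp add: fun_eq_iff e3_def Smat_def)
  have A1': "o_p M ts (\<lambda>n. real (m n) powr (-3/2) * sqrt (real n))" using A1 unfolding ts_eq .
  have A2': "O_p M tb (\<lambda>n. sqrt (real (m n)) / sqrt (real n))" using A2 unfolding tb_eq .
  have A3': "o_p M e3 (\<lambda>n. 1 / real (m n))" using A3 unfolding e3_eq .
  have ts0: "0 \<le> ts n \<omega>" for n \<omega> by (simp add: ts_def tstar_nonneg)
  have tb0: "0 \<le> tb n \<omega>" for n \<omega> by (simp add: tb_def)
  have e30: "0 \<le> e3 n \<omega>" for n \<omega> by (simp add: e3_def opnorm_nonneg)
  define good where "good n \<omega> \<longleftrightarrow> 0 < m n \<and> 0 < n \<and> e3 n \<omega> \<le> c/2 \<and> tb n \<omega> * ts n \<omega> \<le> c/13" for n \<omega>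
  define bad where "bad n = {\<omega>\<in>space M. \<not> good n \<omega>}" for n
  have H: "eventually (\<lambda>n. \<exists>A\<in>sets M. measure M A \<le> \<delta> \<and> bad n \<subseteq> A) sequentially" if d: "\<delta> > 0" for \<delta>
  proof -
    obtain K2 where K2: "K2 \<ge> 1" and EA2: "eventually (\<lambda>n. \<exists>A\<in>sets M. measure M A \<le> \<delta>/3 \<and>
        {\<omega>\<in>space M. norm (tb n \<omega>) > K2 * (sqrt (real (m n)) / sqrt (real n))} \<subseteq> A) sequentially"
      using O_pD[OF A2', of "\<delta>/3"] d by force
    define e1 where "e1 = c / (13 * K2)"
    have e1: "e1 > 0" using c K2 by (simp add: e1_def)
    have EA1: "eventually (\<lambda>n. \<exists>A\<in>sets M. measure M A \<le> \<delta>/3 \<and>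
        {\<omega>\<in>space M. norm (ts n \<omega>) > e1 * (real (m n) powr (-3/2) * sqrt (real n))} \<subseteq> A) sequentially"
      using o_pD[OF A1' e1, of "\<delta>/3"] d by simp
    have EA3: "eventually (\<lambda>n. \<exists>A\<in>sets M. measure M A \<le> \<delta>/3 \<and>
        {\<omega>\<in>space M. norm (e3 n \<omega>) > c/2 * (1 / real (m n))} \<subseteq> A) sequentially"
      using o_pD[OF A3', of "c/2" "\<delta>/3"] d c by simp
    show ?thesis
      using EA1 EA2 EA3 ev_m eventually_ge_at_top[of 1]
    proof eventually_elim
      case (elim n)
      from elim(1) obtain A1 where A1s: "A1 \<in> sets M" "measure M A1 \<le> \<delta>/3"
        "{\<omega>\<in>space M. norm (ts n \<omega>) > e1 * (real (m n) powr (-3/2) * sqrt (real n))} \<subseteq> A1" by blast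
      from elim(2) obtain A2 where A2s: "A2 \<in> sets M" "measure M A2 \<le> \<delta>/3"
        "{\<omega>\<in>space M. norm (tb n \<omega>) > K2 * (sqrt (real (m n)) / sqrt (real n))} \<subseteq> A2" by blast
      from elim(3) obtain A3 where A3s: "A3 \<in> sets M" "measure M A3 \<le> \<delta>/3"
        "{\<omega>\<in>space M. norm (e3 n \<omega>) > c/2 * (1 / real (m n))} \<subseteq> A3" by blast
      have mn: "1 \<le> m n" and n1: "1 \<le> n" using elim by auto
      have mu: "real (m n) \<ge> 1" using mn by simp
      have nr: "real n \<ge> 1" using n1 by simp
      have Asets: "A1 \<union> A2 \<union> A3 \<in> sets M" using A1s A2s A3s by auto
      have "measure M (A1 \<union> A2 \<union> A3) \<le> measure M (A1 \<union> A2) + measure M A3"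
        using A1s A2s A3s by (intro measure_Un_le) auto
      also have "\<dots> \<le> measure M A1 + measure M A2 + measure M A3"
        using A1s A2s by (simp add: measure_Un_le)
      also have "\<dots> \<le> \<delta>" using A1s A2s A3s by simp
      finally have Ameas: "measure M (A1 \<union> A2 \<union> A3) \<le> \<delta>" .
      have "bad n \<subseteq> A1 \<union> A2 \<union> A3"
      proof
        fix \<omega> assume \<omega>: "\<omega> \<in> bad n"
        hence \<omega>s: "\<omega> \<in> space M" and ng: "\<not> good n \<omega>" by (auto simp: bad_def)
        show "\<omega> \<in> A1 \<union> A2 \<union> A3"
        proof (rule ccontr)
          assume "\<omega> \<notin> A1 \<union> A2 \<union> A3"
          hence hts: "ts n \<omega> \<le> e1 * (real (m n) powr (-3/2) * sqrt (real n))"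
            and htb: "tb n \<omega> \<le> K2 * (sqrt (real (m n)) / sqrt (real n))"
            and he3: "e3 n \<omega> \<le> c/2 * (1 / real (m n))"
            using A1s(3) A2s(3) A3s(3) \<omega>s ts0[of n \<omega>] tb0[of n \<omega>] e30[of n \<omega>] by (auto simp: not_less)
          have "c/2 * (1 / real (m n)) \<le> c/2 * 1" using c mu by (intro mult_left_mono) auto
          hence g1: "e3 n \<omega> \<le> c/2" using he3 by simp
          have "tb n \<omega> * ts n \<omega> \<le> (K2 * (sqrt (real (m n)) / sqrt (real n))) * (e1 * (real (m n) powr (-3/2) * sqrt (real n)))"
            using hts htb ts0 tb0 K2 by (intro mult_mono) auto
          also have "\<dots> = K2 * e1 / real (m n)"
          proof -
            have sm: "sqrt (real (m n)) > 0" using mu by simp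
            have sn: "sqrt (real n) > 0" using nr by simp
            have mm: "real (m n) = sqrt (real (m n)) * sqrt (real (m n))" using mu by simp
            have p: "real (m n) powr (-3/2) = 1 / (real (m n) * sqrt (real (m n)))"
              using mu by (intro powr_m32) simp
            show ?thesis unfolding p using sm sn mu by (simp add: field_simps)
          qed
          also have "\<dots> = c / 13 / real (m n)" using K2 by (simp add: e1_def)
          also have "\<dots> \<le> c / 13" using c mu by (simp add: divide_le_eq)
          finally have g2: "tb n \<omega> * ts n \<omega> \<le> c/13" .
          have "good n \<omega>" using g1 g2 mn n1 by (simp add: good_def)
          with ng show False by simp
        qed
      qed
      thus ?case using Asets Ameas by blast
    qed
  qed
  obtain Abad where Abad: "\<And>n. Abad n \<in> sets M" "\<And>n. bad n \<subseteq> Abad n"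
    and Alim: "(\<lambda>n. measure M (Abad n)) \<longlonglongrightarrow> 0"
    using small_cover[of bad M, OF _ H] by (auto simp: bad_def)
  define E where "E n = space M - Abad n" for n
  have Esets: "E n \<in> sets M" for n using Abad(1)[of n] by (auto simp: E_def)
  have "measure M (E n) = 1 - measure M (Abad n)" for n
    using prob_compl[OF Abad(1)[of n]] by (simp add: E_def)
  hence Elim: "(\<lambda>n. measure M (E n)) \<longlonglongrightarrow> 1"
    using tendsto_diff[OF tendsto_const[of 1] Alim] by simp
  have Egood: "good n \<omega>" if "\<omega> \<in> E n" for n \<omega> using that Abad(2)[of n] by (auto simp: E_def bad_def)
  have pdS: "(c - e3 n \<omega>) * (vnorm (m n) a)\<^sup>2 \<le> qf (m n) (Smat n (\<lambda>j. T n j \<omega>)) a" for n \<omega> a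
  proof -
    have "opnorm (m n) (\<lambda>k l. Smat n (\<lambda>j. T n j \<omega>) k l - W n k l) \<le> e3 n \<omega>" by (simp add: e3_def)
    from qfS_bounds(1)[OF regl regu this] show ?thesis .
  qed
  have good_root: "\<exists>!z. el_root (m n) n (\<lambda>j. T n j \<omega>) z" if g: "good n \<omega>" for n \<omega>
  proof -
    have mpos: "m n > 0" and npos: "n > 0" and g3: "e3 n \<omega> \<le> c/2" and g4: "tb n \<omega> * ts n \<omega> \<le> c/13"
      using g by (auto simp: good_def)
    have lam: "c - e3 n \<omega> > 0" using c g3 by simp
    have "6 * vnorm (m n) (tbar n (\<lambda>j. T n j \<omega>)) * tstar (m n) n (\<lambda>j. T n j \<omega>) < c - e3 n \<omega>"
      using g4 g3 c by (simp add: tb_def ts_def)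
    from root_exists[OF mpos npos lam pdS this] obtain z where z: "el_root (m n) n (\<lambda>j. T n j \<omega>) z" by blast
    show ?thesis
    proof (rule ex1I[of _ z])
      show "el_root (m n) n (\<lambda>j. T n j \<omega>) z" by (rule z)
      fix y assume "el_root (m n) n (\<lambda>j. T n j \<omega>) y"
      from root_unique[OF this z npos lam pdS] show "y = z" .
    qed
  qed
  have good_zz: "vnorm (m n) z \<le> 3 * tb n \<omega> / c"
    if g: "good n \<omega>" and R: "el_root (m n) n (\<lambda>j. T n j \<omega>) z" for n \<omega> z
  proof -
    have npos: "n > 0" and g3: "e3 n \<omega> \<le> c/2" and g4: "tb n \<omega> * ts n \<omega> \<le> c/13"
      using g by (auto simp: good_def)
    have "vnorm (m n) z * ((c - e3 n \<omega>) - tb n \<omega> * ts n \<omega>) \<le> tb n \<omega>"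
      using root_bound[OF R npos pdS] by (simp add: tb_def ts_def)
    moreover have "vnorm (m n) z * (c/3) \<le> vnorm (m n) z * ((c - e3 n \<omega>) - tb n \<omega> * ts n \<omega>)"
      using g3 g4 c by (intro mult_left_mono) auto
    ultimately have "vnorm (m n) z * (c/3) \<le> tb n \<omega>" by linarith
    thus ?thesis using c by (simp add: field_simps)
  qed
  define Xf where "Xf n \<omega> = (if \<omega> \<in> E n then
         (let zeta = (THE zeta. el_root (m n) n (\<lambda>j. T n j \<omega>) zeta) in
           (\<Sum>j<n. psi (Z j \<omega>) /\<^sub>R (1 + vdot (m n) zeta (T n j \<omega>))) /\<^sub>R real n
           - (\<Sum>j<n. psi (Z j \<omega>)) /\<^sub>R real n + (\<Sum>j<n. chi (Z j \<omega>)) /\<^sub>R real n)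
       else 0)" for n \<omega>
  have Xf_eq: "(\<lambda>n \<omega>. if \<omega> \<in> E n then
         (let zeta = (THE zeta. el_root (m n) n (\<lambda>j. T n j \<omega>) zeta) in
           (\<Sum>j<n. psi (Z j \<omega>) /\<^sub>R (1 + vdot (m n) zeta (T n j \<omega>))) /\<^sub>R real n
           - (\<Sum>j<n. psi (Z j \<omega>)) /\<^sub>R real n + (\<Sum>j<n. chi (Z j \<omega>)) /\<^sub>R real n)
       else 0) = Xf" by (simp add: fun_eq_iff Xf_def)
  define EE where "EE n j k = integral\<^sup>L M (\<lambda>\<omega>'. T n j \<omega>' k *\<^sub>R psi (Z j \<omega>'))" for n j k
  define b1f where "b1f n \<omega> = sqrt (\<Sum>k<m n. (norm ((\<Sum>j<n. T n j \<omega> k *\<^sub>R psi (Z j \<omega>)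
                   - EE n j k) /\<^sub>R real n))\<^sup>2)" for n \<omega>
  define b2f where "b2f n \<omega> = (\<Sum>i<n. (\<Sum>k<m n. mv (m n) (minv (m n) (W n)) (T n i \<omega>) k *\<^sub>R
                   ((\<Sum>j<n. EE n j k) /\<^sub>R real n)) - chi (Z i \<omega>)) /\<^sub>R real n" for n \<omega>
  have b1_eq: "(\<lambda>n \<omega>. sqrt (\<Sum>k<m n. (norm ((\<Sum>j<n. T n j \<omega> k *\<^sub>R psi (Z j \<omega>)
                   - integral\<^sup>L M (\<lambda>\<omega>'. T n j \<omega>' k *\<^sub>R psi (Z j \<omega>'))) /\<^sub>R real n))\<^sup>2)) = b1f"
    by (simp add: fun_eq_iff b1f_def EE_def)
  have b2_eq: "(\<lambda>n \<omega>. (\<Sum>i<n. (\<Sum>k<m n. mv (m n) (minv (m n) (W n)) (T n i \<omega>) k *\<^sub>R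
                   ((\<Sum>j<n. integral\<^sup>L M (\<lambda>\<omega>'. T n j \<omega>' k *\<^sub>R psi (Z j \<omega>'))) /\<^sub>R real n))
                   - chi (Z i \<omega>)) /\<^sub>R real n) = b2f"
    by (simp add: fun_eq_iff b2f_def EE_def)
  have B1': "o_p M b1f (\<lambda>n. 1 / sqrt (real (m n)))" using B1 unfolding b1_eq .
  have B2': "o_p M b2f (\<lambda>n. 1 / sqrt (real n))" using B2 unfolding b2_eq .
  define Y where "Y j \<omega> = (norm (psi (Z j \<omega>)))\<^sup>2" for j \<omega>
  define I2 where "I2 = integral\<^sup>L Q (\<lambda>z. (norm (psi z))\<^sup>2)"
  have Zm[measurable]: "Z j \<in> measurable M Q" for j using Zmeas by blast
  note psi_meas[measurable]
  have Ymeas: "Y j \<in> borel_measurable M" for j unfolding Y_def by measurable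
  have Yint: "integrable M (Y j)" for j
  proof -
    have "integrable (distr M Q (Z j)) (\<lambda>z. (norm (psi z))\<^sup>2)" using psi_sq Zdist by simp
    thus ?thesis unfolding Y_def by (subst (asm) integrable_distr_eq) auto
  qed
  have YI: "integral\<^sup>L M (Y j) = I2" for j
  proof -
    have "integral\<^sup>L (distr M Q (Z j)) (\<lambda>z. (norm (psi z))\<^sup>2) = integral\<^sup>L M (Y j)"
      unfolding Y_def by (rule integral_distr) auto
    thus ?thesis using Zdist by (simp add: I2_def)
  qed
  have Y0: "0 \<le> Y j x" for j x by (simp add: Y_def)
  have Cp0: "0 \<le> C + c/2" using cC c by simp
  have concl': "o_p M Xf (\<lambda>n. 1 / sqrt (real n))"
    unfolding o_p_def
  proof (intro allI impI)
    fix \<epsilon> \<delta> :: real assume eps: "\<epsilon> > 0" and dlt: "\<delta> > 0"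
    define d6 where "d6 = \<delta> / 6"
    have d6: "d6 > 0" using dlt by (simp add: d6_def)
    have r0: "\<And>n. 0 \<le> sqrt (real (m n)) / sqrt (real n)" by simp
    from O_pD[OF A2' r0 d6] obtain K2 where K2: "K2 \<ge> 1" and EA2: "eventually (\<lambda>n. \<exists>A\<in>sets M. measure M A \<le> d6 \<and>
        {\<omega>\<in>space M. norm (tb n \<omega>) > K2 * (sqrt (real (m n)) / sqrt (real n))} \<subseteq> A) sequentially"
      by blast
    note mex = markov_avg[OF P Ymeas Yint Y0 YI d6]
    then obtain K6 where K6c: "K6 \<ge> 0 \<and> (\<forall>n>0. \<exists>A\<in>sets M. measure M A \<le> d6 \<and>
        {\<omega>\<in>space M. (\<Sum>j<n. Y j \<omega>) / real n > K6} \<subseteq> A)" ..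
    have K6: "K6 \<ge> 0" using K6c by (rule conjunct1)
    have MK: "\<exists>A\<in>sets M. measure M A \<le> d6 \<and>
        {\<omega>\<in>space M. (\<Sum>j<n. Y j \<omega>) / real n > K6} \<subseteq> A" if "n > 0" for n
      using spec[OF conjunct2[OF K6c], of n] that by (rule mp)
    define Cp where "Cp = C + c/2"
    define Kall where "Kall = K2 / c + sqrt K6 * (sqrt Cp * ((3 * K2 / c + 18 * Cp * K2\<^sup>2 / c\<^sup>2) / c)) + 1
               + 18 * K2\<^sup>2 * sqrt Cp * sqrt K6 / c\<^sup>2"
    have Kall0: "Kall \<ge> 0" unfolding Kall_def using K2 K6 Cp0 c
      by (intro add_nonneg_nonneg mult_nonneg_nonneg divide_nonneg_pos) (auto simp: Cp_def)
    define \<eta> where "\<eta> = \<epsilon> / (Kall + 1)"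
    have eta: "\<eta> > 0" using eps Kall0 by (simp add: \<eta>_def)
    have etaK: "\<eta> * Kall \<le> \<epsilon>"
    proof -
      have "\<eta> * Kall \<le> \<eta> * (Kall + 1)" using eta by simp
      also have "\<dots> = \<epsilon>" using Kall0 by (simp add: \<eta>_def)
      finally show ?thesis .
    qed
    have EA1: "eventually (\<lambda>n. \<exists>A\<in>sets M. measure M A \<le> d6 \<and>
        {\<omega>\<in>space M. norm (ts n \<omega>) > \<eta> * (real (m n) powr (-3/2) * sqrt (real n))} \<subseteq> A) sequentially"
      by (rule o_pD[OF A1' eta d6])
    have EA3: "eventually (\<lambda>n. \<exists>A\<in>sets M. measure M A \<le> d6 \<and>
        {\<omega>\<in>space M. norm (e3 n \<omega>) > \<eta> * (1 / real (m n))} \<subseteq> A) sequentially"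
      by (rule o_pD[OF A3' eta d6])
    have EB1: "eventually (\<lambda>n. \<exists>A\<in>sets M. measure M A \<le> d6 \<and>
        {\<omega>\<in>space M. norm (b1f n \<omega>) > \<eta> * (1 / sqrt (real (m n)))} \<subseteq> A) sequentially"
      by (rule o_pD[OF B1' eta d6])
    have EB2: "eventually (\<lambda>n. \<exists>A\<in>sets M. measure M A \<le> d6 \<and>
        {\<omega>\<in>space M. norm (b2f n \<omega>) > \<eta> * (1 / sqrt (real n))} \<subseteq> A) sequentially"
      by (rule o_pD[OF B2' eta d6])
    show "eventually (\<lambda>n. \<exists>A\<in>sets M. measure M A \<le> \<delta> \<and>
        {\<omega>\<in>space M. norm (Xf n \<omega>) > \<epsilon> * (1 / sqrt (real n))} \<subseteq> A) sequentially"
      using EA1 EA2 EA3 EB1 EB2 ev_m eventually_ge_at_top[of 1]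
    proof eventually_elim
      case (elim n)
      have mn: "1 \<le> m n" and n1: "1 \<le> n" using elim by auto
      have mu: "real (m n) \<ge> 1" using mn by simp
      have nr: "real n \<ge> 1" using n1 by simp
      from elim(1) obtain A1 where A1s: "A1 \<in> sets M" "measure M A1 \<le> d6"
        "{\<omega>\<in>space M. norm (ts n \<omega>) > \<eta> * (real (m n) powr (-3/2) * sqrt (real n))} \<subseteq> A1" by blast
      from elim(2) obtain A2 where A2s: "A2 \<in> sets M" "measure M A2 \<le> d6"
        "{\<omega>\<in>space M. norm (tb n \<omega>) > K2 * (sqrt (real (m n)) / sqrt (real n))} \<subseteq> A2" by blast
      from elim(3) obtain A3 where A3s: "A3 \<in> sets M" "measure M A3 \<le> d6"
        "{\<omega>\<in>space M. norm (e3 n \<omega>) > \<eta> * (1 / real (m n))} \<subseteq> A3" by blast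
      from elim(4) obtain A4 where A4s: "A4 \<in> sets M" "measure M A4 \<le> d6"
        "{\<omega>\<in>space M. norm (b1f n \<omega>) > \<eta> * (1 / sqrt (real (m n)))} \<subseteq> A4" by blast
      from elim(5) obtain A5 where A5s: "A5 \<in> sets M" "measure M A5 \<le> d6"
        "{\<omega>\<in>space M. norm (b2f n \<omega>) > \<eta> * (1 / sqrt (real n))} \<subseteq> A5" by blast
      from MK[of n] n1 obtain A6 where A6s: "A6 \<in> sets M" "measure M A6 \<le> d6"
        "{\<omega>\<in>space M. (\<Sum>j<n. Y j \<omega>) / real n > K6} \<subseteq> A6" by auto
      define A where "A = A1 \<union> A2 \<union> A3 \<union> A4 \<union> A5 \<union> A6"
      have Asets: "A \<in> sets M" using A1s A2s A3s A4s A5s A6s by (auto simp: A_def)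
      have "measure M A \<le> measure M A1 + measure M A2 + measure M A3 + measure M A4 + measure M A5 + measure M A6"
      proof -
        have s1: "measure M (A1 \<union> A2) \<le> measure M A1 + measure M A2" using A1s A2s by (intro measure_Un_le) auto
        have s2: "measure M (A1 \<union> A2 \<union> A3) \<le> measure M (A1 \<union> A2) + measure M A3" using A1s A2s A3s by (intro measure_Un_le) auto
        have s3: "measure M (A1 \<union> A2 \<union> A3 \<union> A4) \<le> measure M (A1 \<union> A2 \<union> A3) + measure M A4" using A1s A2s A3s A4s by (intro measure_Un_le) auto
        have s4: "measure M (A1 \<union> A2 \<union> A3 \<union> A4 \<union> A5) \<le> measure M (A1 \<union> A2 \<union> A3 \<union> A4) + measure M A5" using A1s A2s A3s A4s A5s by (intro measure_Un_le) auto
        have s5: "measure M A \<le> measure M (A1 \<union> A2 \<union> A3 \<union> A4 \<union> A5) + measure M A6" unfolding A_def using A1s A2s A3s A4s A5s A6s by (intro measure_Un_le) auto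
        show ?thesis using s1 s2 s3 s4 s5 by linarith
      qed
      also have "\<dots> \<le> \<delta>" using A1s A2s A3s A4s A5s A6s by (simp add: d6_def)
      finally have Ameas: "measure M A \<le> \<delta>" .
      have "{\<omega>\<in>space M. norm (Xf n \<omega>) > \<epsilon> * (1 / sqrt (real n))} \<subseteq> A"
      proof
        fix \<omega> assume \<omega>: "\<omega> \<in> {\<omega>\<in>space M. norm (Xf n \<omega>) > \<epsilon> * (1 / sqrt (real n))}"
        hence \<omega>s: "\<omega> \<in> space M" and big: "norm (Xf n \<omega>) > \<epsilon> * (1 / sqrt (real n))" by auto
        show "\<omega> \<in> A"
        proof (rule ccontr)
          assume nA: "\<omega> \<notin> A"
          have nA1: "\<omega> \<notin> A1" and nA2: "\<omega> \<notin> A2" and nA3: "\<omega> \<notin> A3" and nA4: "\<omega> \<notin> A4"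
            and nA5: "\<omega> \<notin> A5" and nA6: "\<omega> \<notin> A6" using nA by (simp_all add: A_def)
          have "norm (ts n \<omega>) \<le> \<eta> * (real (m n) powr (-3/2) * sqrt (real n))"
            by (rule outside[OF A1s(3) \<omega>s nA1])
          hence hts: "ts n \<omega> \<le> \<eta> * (real (m n) powr (-3/2) * sqrt (real n))" using ts0[of n \<omega>] by simp
          have "norm (tb n \<omega>) \<le> K2 * (sqrt (real (m n)) / sqrt (real n))"
            by (rule outside[OF A2s(3) \<omega>s nA2])
          hence htb: "tb n \<omega> \<le> K2 * (sqrt (real (m n)) / sqrt (real n))" using tb0[of n \<omega>] by simp
          have "norm (e3 n \<omega>) \<le> \<eta> * (1 / real (m n))"
            by (rule outside[OF A3s(3) \<omega>s nA3])
          hence he3: "e3 n \<omega> \<le> \<eta> * (1 / real (m n))" using e30[of n \<omega>] by simp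
          have "norm (b1f n \<omega>) \<le> \<eta> * (1 / sqrt (real (m n)))"
            by (rule outside[OF A4s(3) \<omega>s nA4])
          hence hb1: "b1f n \<omega> \<le> \<eta> * (1 / sqrt (real (m n)))" by (simp add: b1f_def)
          have hb2: "norm (b2f n \<omega>) \<le> \<eta> * (1 / sqrt (real n))"
            by (rule outside[OF A5s(3) \<omega>s nA5])
          have hP2: "(\<Sum>j<n. Y j \<omega>) / real n \<le> K6"
            by (rule outside[OF A6s(3) \<omega>s nA6])
          have "norm (Xf n \<omega>) \<le> \<epsilon> * (1 / sqrt (real n))"
          proof (cases "\<omega> \<in> E n")
            case False
            thus ?thesis using eps by (simp add: Xf_def)
          next
            case True
            have g: "good n \<omega>" by (rule Egood[OF True])
            have mpos: "m n > 0" and npos: "n > 0" and g3: "e3 n \<omega> \<le> c/2" and g4: "tb n \<omega> * ts n \<omega> \<le> c/13"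
              using g by (auto simp: good_def)
            define z where "z = (THE zeta. el_root (m n) n (\<lambda>j. T n j \<omega>) zeta)"
            have R: "el_root (m n) n (\<lambda>j. T n j \<omega>) z"
              unfolding z_def by (rule theI'[OF good_root[OF g]])
            have Xz: "Xf n \<omega> = (\<Sum>j<n. psi (Z j \<omega>) /\<^sub>R (1 + vdot (m n) z (T n j \<omega>))) /\<^sub>R real n
                 - (\<Sum>j<n. psi (Z j \<omega>)) /\<^sub>R real n + (\<Sum>j<n. chi (Z j \<omega>)) /\<^sub>R real n"
              using True by (simp add: Xf_def z_def Let_def)
            have zz: "vnorm (m n) z \<le> 3 * tb n \<omega> / c" by (rule good_zz[OF g R])
            have zz0: "0 \<le> vnorm (m n) z" by simp
            have small: "vnorm (m n) z * tstar (m n) n (\<lambda>j. T n j \<omega>) \<le> 1/2"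
            proof -
              have "vnorm (m n) z * ts n \<omega> \<le> (3 * tb n \<omega> / c) * ts n \<omega>"
                using zz ts0[of n \<omega>] by (rule mult_right_mono)
              also have "\<dots> = 3 * (tb n \<omega> * ts n \<omega>) / c" by simp
              also have "\<dots> \<le> 3 * (c/13) / c" using g4 c by (intro divide_right_mono) auto
              also have "\<dots> \<le> 1/2" using c by simp
              finally show ?thesis by (simp add: ts_def)
            qed
            have e3c: "opnorm (m n) (\<lambda>k l. Smat n (\<lambda>j. T n j \<omega>) k l - W n k l) \<le> c/2"
              using g3 by (simp add: e3_def)
            note EXP = expansion[where P="\<lambda>j. psi (Z j \<omega>)" and X="\<lambda>j. chi (Z j \<omega>)" and EE="EE n"
                  and Ak="\<lambda>k. (\<Sum>j<n. EE n j k) /\<^sub>R real n", OF mpos npos c regl regu e3c R small refl]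
            note FA = final_arith[of c K2 K6 "C + c/2" \<eta> "sqrt (real (m n))" "sqrt (real n)"
                "vnorm (m n) (tbar n (\<lambda>j. T n j \<omega>))" "tstar (m n) n (\<lambda>j. T n j \<omega>)"
                "opnorm (m n) (\<lambda>k l. Smat n (\<lambda>j. T n j \<omega>) k l - W n k l)"
                "sqrt (\<Sum>k<m n. (norm ((\<Sum>j<n. T n j \<omega> k *\<^sub>R psi (Z j \<omega>) - EE n j k) /\<^sub>R real n))\<^sup>2)"
                "norm ((\<Sum>i<n. (\<Sum>k<m n. mv (m n) (minv (m n) (W n)) (T n i \<omega>) k *\<^sub>R ((\<Sum>j<n. EE n j k) /\<^sub>R real n)) - chi (Z i \<omega>)) /\<^sub>R real n)"
                "(\<Sum>j<n. (norm (psi (Z j \<omega>)))\<^sup>2) / real n" "vnorm (m n) z"]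
            have sm: "sqrt (real (m n)) \<ge> 1" using mu by simp
            have sn: "sqrt (real n) > 0" using nr by simp
            have p: "real (m n) powr (-3/2) = 1 / (real (m n) * sqrt (real (m n)))"
              using mu by (intro powr_m32) simp
            have cube: "(sqrt (real (m n)))^3 = real (m n) * sqrt (real (m n))"
              by (simp add: power3_eq_cube)
            have tsb: "tstar (m n) n (\<lambda>j. T n j \<omega>) \<le> \<eta> * sqrt (real n) / (sqrt (real (m n)))^3"
              using hts[unfolded p] unfolding cube by (simp add: ts_def)
            have sq2: "(sqrt (real (m n)))\<^sup>2 = real (m n)" by simp
            have e3b: "opnorm (m n) (\<lambda>k l. Smat n (\<lambda>j. T n j \<omega>) k l - W n k l) \<le> \<eta> / (sqrt (real (m n)))\<^sup>2"
              using he3 unfolding sq2 by (simp add: e3_def)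
            have tbb: "vnorm (m n) (tbar n (\<lambda>j. T n j \<omega>)) \<le> K2 * sqrt (real (m n)) / sqrt (real n)"
              using htb by (simp add: tb_def)
            have b1b: "sqrt (\<Sum>k<m n. (norm ((\<Sum>j<n. T n j \<omega> k *\<^sub>R psi (Z j \<omega>) - EE n j k) /\<^sub>R real n))\<^sup>2)
                \<le> \<eta> / sqrt (real (m n))"
              using hb1 by (simp add: b1f_def)
            have b2b: "norm ((\<Sum>i<n. (\<Sum>k<m n. mv (m n) (minv (m n) (W n)) (T n i \<omega>) k *\<^sub>R ((\<Sum>j<n. EE n j k) /\<^sub>R real n)) - chi (Z i \<omega>)) /\<^sub>R real n)
                \<le> \<eta> / sqrt (real n)"
              using hb2 by (simp add: b2f_def)
            have P2b: "(\<Sum>j<n. (norm (psi (Z j \<omega>)))\<^sup>2) / real n \<le> K6"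
              using hP2 by (simp add: Y_def)
            have P20: "0 \<le> (\<Sum>j<n. (norm (psi (Z j \<omega>)))\<^sup>2) / real n" by (simp add: sum_nonneg)
            have zzb: "vnorm (m n) z \<le> 3 * vnorm (m n) (tbar n (\<lambda>j. T n j \<omega>)) / c"
              using zz by (simp add: tb_def)
            have K20: "0 \<le> K2" using K2 by simp
            have eta0: "0 \<le> \<eta>" using eta by simp
            have tb00: "0 \<le> vnorm (m n) (tbar n (\<lambda>j. T n j \<omega>))" by simp
            have ts00: "0 \<le> tstar (m n) n (\<lambda>j. T n j \<omega>)" by (rule tstar_nonneg)
            have e300: "0 \<le> opnorm (m n) (\<lambda>k l. Smat n (\<lambda>j. T n j \<omega>) k l - W n k l)" by (rule opnorm_nonneg)
            have b10: "0 \<le> sqrt (\<Sum>k<m n. (norm ((\<Sum>j<n. T n j \<omega> k *\<^sub>R psi (Z j \<omega>) - EE n j k) /\<^sub>R real n))\<^sup>2)"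
              by (simp add: sum_nonneg)
            have "norm (Xf n \<omega>) \<le> \<eta> * Kall / sqrt (real n)"
              unfolding Xz Kall_def Cp_def
              by (rule order.trans[OF EXP FA[OF c K20 K6 Cp0 eta0 sm sn tb00 tbb ts00 tsb e300 e3b b10 b1b b2b P20 P2b zz0 zzb]])
            also have "\<dots> \<le> \<epsilon> / sqrt (real n)" using etaK sn by (intro divide_right_mono) auto
            finally show ?thesis by simp
          qed
          with big show False by simp
        qed
      qed
      thus ?case using Asets Ameas by blast
    qed
  qed
  have concl: "o_p M (\<lambda>n \<omega>. if \<omega> \<in> E n then
         (let zeta = (THE zeta. el_root (m n) n (\<lambda>j. T n j \<omega>) zeta) in
           (\<Sum>j<n. psi (Z j \<omega>) /\<^sub>R (1 + vdot (m n) zeta (T n j \<omega>))) /\<^sub>R real n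
           - (\<Sum>j<n. psi (Z j \<omega>)) /\<^sub>R real n + (\<Sum>j<n. chi (Z j \<omega>)) /\<^sub>R real n)
       else 0) (\<lambda>n. 1 / sqrt (real n))"
    unfolding Xf_eq by (rule concl')
  show ?thesis
  proof (intro exI[of _ E] conjI allI ballI)
    show "E n \<in> sets M" for n by (rule Esets)
    show "(\<lambda>n. measure M (E n)) \<longlonglongrightarrow> 1" by (rule Elim)
    show "\<exists>!zeta. el_root (m n) n (\<lambda>j. T n j \<omega>) zeta" if "\<omega> \<in> E n" for n \<omega>
      using good_root[OF Egood[OF that]] .
  qed (rule concl)
qed

end
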